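(* Let $X$ be a Banach lattice and let $(e_n)_{n\ge1}$ be a semi-normalized basic sequence in $X$ (i.e. $0<\inf_n\|e_n\|\le\sup_n\|e_n\|<\infty$), with closed linear span $E=[e_n]$ and biorthogonal functionals $e_n^*\in E^*$. For $x\in E$ let $\mathcal{G}_m(x)$ denote the $m$-th natural greedy sum of $x$ (defined in the context). The following are equivalent. (i) For all $x\in E$, $\mathcal{G}_m(x)\xrightarrow{u}x$ as $m\to\infty$. (ii) For all $x\in E$, $\mathcal{G}_m(x)\xrightarrow{o}x$ as $m\to\infty$. (iii) For all $x\in E$ there is $u\in X$ with $|\mathcal{G}_m(x)|\le u$ for all $m$. (iv) For all $x\in E$, the sequence $\big(\bigvee_{n=1}^m|\mathcal{G}_n(x)|\big)_{m\ge1}$ is norm bounded. (v) There exists $C\ge1$ such that for all $x\in E$ and $m\in\mathbb{N}$, $\big\|\bigvee_{n=1}^m|\mathcal{G}_n(x)|\big\|\le C\|x\|$.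
   Context: For $x\in E$, the natural greedy ordering is the injective map $\rho=\rho_x:\mathbb{N}\to\mathbb{N}$ such that $\{n: e_n^*(x)\ne0\}\subseteq\rho(\mathbb{N})$ and, whenever $j<k$, either $|e^*_{\rho(j)}(x)|>|e^*_{\rho(k)}(x)|$, or $|e^*_{\rho(j)}(x)|=|e^*_{\rho(k)}(x)|$ and $\rho(j)<\rho(k)$. The $m$-th natural greedy sum is $\mathcal{G}_m(x)=\sum_{n=1}^m e^*_{\rho(n)}(x)e_{\rho(n)}$. Convergences in $X$: $x_n\xrightarrow{u}x$ (uniform convergence) means there exist $e\in X_+$ and real numbers $\epsilon_k\downarrow0$ such that for every $k$ there is $n_k$ with $|x_n-x|\le\epsilon_k e$ for all $n\ge n_k$. $x_n\xrightarrow{o}x$ (order convergence) means there is a net $(y_\beta)$ in $X$ with $y_\beta\downarrow0$ (decreasing with infimum $0$) such that for every $\beta$ there is $n_\beta$ with $|x_n-x|\le y_\beta$ for all $n\ge n_\beta$. *)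

theory Defs
  imports "HOL-Analysis.Analysis"
begin

class banach_lattice = banach + ordered_real_vector + lattice +
  assumes lattice_norm_mono:
    "sup x (- x) \<le> sup y (- y) \<Longrightarrow> norm x \<le> norm y"

definition labs :: "'a::{lattice,uminus} \<Rightarrow> 'a" where
  "labs x = sup x (- x)"

definition cspan :: "(nat \<Rightarrow> 'a::real_normed_vector) \<Rightarrow> 'a set" where
  "cspan e = closure (span (range e))"

definition basic_sequence :: "(nat \<Rightarrow> 'a::real_normed_vector) \<Rightarrow> bool" where
  "basic_sequence e \<longleftrightarrow> (\<forall>n. e n \<noteq> 0) \<and>
     (\<forall>x \<in> cspan e. \<exists>!a. (\<lambda>N. \<Sum>n<N. a n *\<^sub>R e n) \<longlonglongrightarrow> x)"

definition semi_normalized :: "(nat \<Rightarrow> 'a::real_normed_vector) \<Rightarrow> bool" where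
  "semi_normalized e \<longleftrightarrow> (\<exists>c>0. \<forall>n. c \<le> norm (e n)) \<and> (\<exists>C. \<forall>n. norm (e n) \<le> C)"

definition coeff :: "(nat \<Rightarrow> 'a::real_normed_vector) \<Rightarrow> 'a \<Rightarrow> nat \<Rightarrow> real" where
  "coeff e x = (THE a. (\<lambda>N. \<Sum>n<N. a n *\<^sub>R e n) \<longlonglongrightarrow> x)"

text \<open>Natural greedy orderings of x (any choice yields the same greedy sums).\<close>
definition is_natural_greedy_ordering ::
    "(nat \<Rightarrow> 'a::real_normed_vector) \<Rightarrow> 'a \<Rightarrow> (nat \<Rightarrow> nat) \<Rightarrow> bool" where
  "is_natural_greedy_ordering e x \<rho> \<longleftrightarrow> inj \<rho> \<and> {n. coeff e x n \<noteq> 0} \<subseteq> range \<rho> \<and>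
     (\<forall>j k. j < k \<longrightarrow>
        \<bar>coeff e x (\<rho> j)\<bar> > \<bar>coeff e x (\<rho> k)\<bar> \<or>
        (\<bar>coeff e x (\<rho> j)\<bar> = \<bar>coeff e x (\<rho> k)\<bar> \<and> \<rho> j < \<rho> k))"

definition greedy_ordering :: "(nat \<Rightarrow> 'a::real_normed_vector) \<Rightarrow> 'a \<Rightarrow> nat \<Rightarrow> nat" where
  "greedy_ordering e x = (SOME \<rho>. is_natural_greedy_ordering e x \<rho>)"

definition greedy_sum :: "(nat \<Rightarrow> 'a::real_normed_vector) \<Rightarrow> nat \<Rightarrow> 'a \<Rightarrow> 'a" where
  "greedy_sum e m x = (\<Sum>n<m. coeff e x (greedy_ordering e x n) *\<^sub>R e (greedy_ordering e x n))"

definition u_conv :: "(nat \<Rightarrow> 'a::{ordered_real_vector,lattice}) \<Rightarrow> 'a \<Rightarrow> bool" where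
  "u_conv xs x \<longleftrightarrow> (\<exists>u \<ge> 0. \<exists>\<epsilon> :: nat \<Rightarrow> real. antimono \<epsilon> \<and> \<epsilon> \<longlonglongrightarrow> 0 \<and>
      (\<forall>k. \<exists>nk. \<forall>n \<ge> nk. labs (xs n - x) \<le> \<epsilon> k *\<^sub>R u))"

text \<open>Order convergence: dominated eventually by every member of a decreasing net with
  infimum 0. A net decreasing to 0 is represented by its range, i.e. a nonempty downward
  directed set D whose infimum in X is 0 (indexed by itself).\<close>
definition o_conv :: "(nat \<Rightarrow> 'a::{ordered_real_vector,lattice}) \<Rightarrow> 'a \<Rightarrow> bool" where
  "o_conv xs x \<longleftrightarrow> (\<exists>D. D \<noteq> {} \<and>
      (\<forall>a\<in>D. \<forall>b\<in>D. \<exists>c\<in>D. c \<le> a \<and> c \<le> b) \<and>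
      (\<forall>d\<in>D. 0 \<le> d) \<and> (\<forall>z. (\<forall>d\<in>D. z \<le> d) \<longrightarrow> z \<le> 0) \<and>
      (\<forall>d\<in>D. \<exists>nd. \<forall>n \<ge> nd. labs (xs n - x) \<le> d))"

end

theory Submission
  imports Defs
begin


lemma labs_ge1: "x \<le> labs (x::'a::banach_lattice)"
  by (simp add: labs_def)

lemma labs_ge2: "- x \<le> labs (x::'a::banach_lattice)"
  by (simp add: labs_def)

lemma labs_le_iff: "labs (x::'a::banach_lattice) \<le> u \<longleftrightarrow> x \<le> u \<and> - x \<le> u"
  by (simp add: labs_def)

lemma half_nonneg:
  fixes a :: "'a::banach_lattice"
  assumes "0 \<le> a + a" shows "0 \<le> a"
proof -
  have eq: "(1/2::real) *\<^sub>R (a + a) = a"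
    by (simp flip: scaleR_2)
  have "(1/2::real) *\<^sub>R 0 \<le> (1/2::real) *\<^sub>R (a + a)"
    by (rule scaleR_left_mono[OF assms]) simp
  then show ?thesis by (simp only: eq scaleR_zero_right)
qed

lemma labs_nonneg: "0 \<le> labs (x::'a::banach_lattice)"
proof -
  have "x + - x \<le> labs x + labs x"
    by (rule add_mono[OF labs_ge1 labs_ge2])
  then have "0 \<le> labs x + labs x" by (simp only: add.right_inverse)
  then show ?thesis by (rule half_nonneg)
qed

lemma labs_of_nonneg: "0 \<le> (x::'a::banach_lattice) \<Longrightarrow> labs x = x"
  unfolding labs_def
  by (metis neg_le_0_iff_le order_trans sup.absorb1)

lemma labs_labs: "labs (labs (x::'a::banach_lattice)) = labs x"
  by (simp add: labs_nonneg labs_of_nonneg)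

lemma labs_zero [simp]: "labs (0::'a::banach_lattice) = 0"
  by (simp add: labs_of_nonneg)

lemma labs_uminus: "labs (- (x::'a::banach_lattice)) = labs x"
  by (simp add: labs_def sup.commute)

lemma labs_minus_commute: "labs ((x::'a::banach_lattice) - y) = labs (y - x)"
  by (metis labs_uminus minus_diff_eq)

lemma labs_triangle: "labs ((x::'a::banach_lattice) + y) \<le> labs x + labs y"
  unfolding labs_le_iff
  by (metis add_mono labs_ge1 labs_ge2 minus_add_distrib add.commute)

lemma labs_triangle_diff: "labs ((x::'a::banach_lattice) - y) \<le> labs x + labs y"
  using labs_triangle[of x "-y"] by (simp add: labs_uminus)

lemma labs_le_of_bounds: "(x::'a::banach_lattice) \<le> u \<Longrightarrow> - x \<le> u \<Longrightarrow> labs x \<le> u"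
  by (simp add: labs_le_iff)

lemma norm_labs: "norm (labs (x::'a::banach_lattice)) = norm x"
proof -
  have eq: "sup (labs x) (- labs x) = sup x (- x)"
    using labs_labs[of x] by (simp add: labs_def)
  have "norm (labs x) \<le> norm x"
    by (rule lattice_norm_mono) (simp add: eq)
  moreover have "norm x \<le> norm (labs x)"
    by (rule lattice_norm_mono) (simp add: eq)
  ultimately show ?thesis by simp
qed

lemma norm_le_labs_le: "labs (x::'a::banach_lattice) \<le> u \<Longrightarrow> norm x \<le> norm u"
proof -
  assume a: "labs x \<le> u"
  then have "0 \<le> u" using labs_nonneg order_trans by blast
  then have "labs u = u" by (rule labs_of_nonneg)
  with a have "sup x (- x) \<le> sup u (- u)" by (simp add: labs_def)
  then show ?thesis by (rule lattice_norm_mono)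
qed

lemma norm_mono_nonneg: "0 \<le> (x::'a::banach_lattice) \<Longrightarrow> x \<le> y \<Longrightarrow> norm x \<le> norm y"
  by (simp add: labs_of_nonneg norm_le_labs_le)

lemma labs_scaleR: "labs (c *\<^sub>R (x::'a::banach_lattice)) = \<bar>c\<bar> *\<^sub>R labs x"
proof -
  have le: "labs (c *\<^sub>R z) \<le> \<bar>c\<bar> *\<^sub>R labs z" for c and z :: 'a
  proof (cases "c \<ge> 0")
    case True
    then show ?thesis
      by (intro labs_le_of_bounds) (auto intro: scaleR_left_mono labs_ge1 labs_ge2 simp flip: scaleR_minus_right)
  next
    case False
    then have "c *\<^sub>R z = \<bar>c\<bar> *\<^sub>R (- z)" "- (c *\<^sub>R z) = \<bar>c\<bar> *\<^sub>R z" by auto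
    then show ?thesis
      by (metis abs_ge_zero labs_ge1 labs_ge2 labs_le_of_bounds scaleR_left_mono)
  qed
  show ?thesis
  proof (cases "c = 0")
    case True then show ?thesis by simp
  next
    case False
    have "labs x = labs (inverse c *\<^sub>R (c *\<^sub>R x))" using False by simp
    also have "\<dots> \<le> \<bar>inverse c\<bar> *\<^sub>R labs (c *\<^sub>R x)" by (rule le)
    finally have "\<bar>c\<bar> *\<^sub>R labs x \<le> \<bar>c\<bar> *\<^sub>R (\<bar>inverse c\<bar> *\<^sub>R labs (c *\<^sub>R x))"
      by (intro scaleR_left_mono) auto
    also have "\<dots> = labs (c *\<^sub>R x)" using False by (simp add: abs_inverse)
    finally show ?thesis using le[of c x] by (rule antisym[rotated])
  qed
qed

lemma labs_sum_le:
  fixes f :: "'b \<Rightarrow> 'a::banach_lattice"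
  shows "labs (sum f A) \<le> sum (\<lambda>i. labs (f i)) A"
proof (induction A rule: infinite_finite_induct)
  case (insert a A)
  then show ?case
    by simp (meson add_left_mono labs_triangle order_trans)
qed simp_all

lemma sum_nonneg_la:
  fixes f :: "'b \<Rightarrow> 'a::banach_lattice"
  shows "(\<And>i. i \<in> A \<Longrightarrow> 0 \<le> f i) \<Longrightarrow> 0 \<le> sum f A"
  by (rule sum_nonneg)

definition negp :: "'a::banach_lattice \<Rightarrow> 'a" where "negp a = sup (- a) 0"

lemma negp_le: "negp (a::'a::banach_lattice) \<le> negp b + labs (a - b)"
proof -
  have "- a \<le> negp b + labs (a - b)"
  proof -
    have "- a = - b + (b - a)" by simp
    also have "\<dots> \<le> negp b + labs (a - b)"
      by (intro add_mono) (auto simp: negp_def labs_minus_commute[of a b] labs_ge1)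
    finally show ?thesis .
  qed
  moreover have "0 \<le> negp b + labs (a - b)"
    by (intro add_nonneg_nonneg) (auto simp: negp_def labs_nonneg)
  ultimately show ?thesis by (simp add: negp_def)
qed

lemma norm_negp_diff: "norm (negp (a::'a::banach_lattice) - negp b) \<le> norm (a - b)"
proof -
  have "labs (negp a - negp b) \<le> labs (a - b)"
  proof (intro labs_le_of_bounds)
    show "negp a - negp b \<le> labs (a - b)"
      using diff_right_mono[OF negp_le[of a b], of "negp b"] by (simp only: add_diff_cancel_left')
    show "- (negp a - negp b) \<le> labs (a - b)"
      using diff_right_mono[OF negp_le[of b a], of "negp a"] labs_minus_commute[of a b]
      by (simp only: add_diff_cancel_left' minus_diff_eq)
  qed
  then have "norm (negp a - negp b) \<le> norm (labs (a - b))" by (rule norm_le_labs_le)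
  then show ?thesis by (simp only: norm_labs)
qed

lemma negp_zero_iff: "negp (a::'a::banach_lattice) = 0 \<longleftrightarrow> 0 \<le> a"
  unfolding negp_def
  by (metis neg_le_0_iff_le sup.absorb_iff2 sup.commute)

lemma closed_nonneg: "closed {y::'a::banach_lattice. 0 \<le> y}"
proof (rule closed_sequential_limits[THEN iffD2], intro allI impI, elim conjE)
  fix f :: "nat \<Rightarrow> 'a" and l
  assume f: "\<forall>n. f n \<in> {y. 0 \<le> y}" and lim: "f \<longlonglongrightarrow> l"
  have "norm (negp l) \<le> norm (f n - l)" for n
    using norm_negp_diff[of l "f n"] f by (simp add: negp_zero_iff[THEN iffD2] norm_minus_commute)
  moreover have "(\<lambda>n. norm (f n - l)) \<longlonglongrightarrow> 0"
    using tendsto_norm[OF LIM_zero[OF lim]] by simp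
  ultimately have "norm (negp l) \<le> 0"
    by (intro tendsto_lowerbound[OF _ always_eventually]) auto
  then show "l \<in> {y. 0 \<le> y}" by (simp add: negp_zero_iff)
qed

lemma closed_ge: "closed {y::'a::banach_lattice. v \<le> y}"
proof -
  have "{y. v \<le> y} = (\<lambda>y. y - v) -` {y. 0 \<le> y}" by auto
  then show ?thesis
    by (simp only:) (intro closed_vimage closed_nonneg continuous_intros)
qed

lemma lim_ge:
  fixes f :: "nat \<Rightarrow> 'a::banach_lattice"
  assumes "f \<longlonglongrightarrow> l" "eventually (\<lambda>n. v \<le> f n) sequentially"
  shows "v \<le> l"
proof -
  have "l \<in> {y. v \<le> y}"
    by (rule Lim_in_closed_set[OF closed_ge _ _ assms(1)]) (use assms(2) in auto)
  then show ?thesis by simp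
qed

lemma suminf_ge_term:
  fixes f :: "nat \<Rightarrow> 'a::banach_lattice"
  assumes "summable f" "\<And>n. 0 \<le> f n"
  shows "f i \<le> suminf f"
proof (rule lim_ge[OF summable_LIMSEQ[OF assms(1)]])
  show "\<forall>\<^sub>F n in sequentially. f i \<le> sum f {..<n}"
    using eventually_ge_at_top[of "Suc i"]
  proof (rule eventually_mono)
    fix n assume "Suc i \<le> n"
    then have "sum f {..<n} = f i + sum f ({..<n} - {i})"
      by (subst sum.remove[of _ i]) auto
    moreover have "0 \<le> sum f ({..<n} - {i})" using assms(2) by (intro sum_nonneg) auto
    ultimately show "f i \<le> sum f {..<n}" by simp
  qed
qed

lemma Sup_fin_ge:
  fixes f :: "nat \<Rightarrow> 'a::banach_lattice"
  assumes "n \<in> A" "finite A"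
  shows "f n \<le> Sup_fin (f ` A)"
  using assms by (intro Sup_fin.coboundedI) auto

lemma Sup_fin_le:
  fixes f :: "nat \<Rightarrow> 'a::banach_lattice"
  assumes "finite A" "A \<noteq> {}" "\<And>n. n \<in> A \<Longrightarrow> f n \<le> u"
  shows "Sup_fin (f ` A) \<le> u"
  using assms by (intro Sup_fin.boundedI) auto


locale bseq =
  fixes e :: "nat \<Rightarrow> 'a::banach_lattice"
  assumes basic: "basic_sequence e" and semi: "semi_normalized e"
begin

abbreviation E where "E \<equiv> cspan e"
abbreviation cf where "cf x \<equiv> coeff e x"

definition Ssum :: "nat \<Rightarrow> 'a \<Rightarrow> 'a" where
  "Ssum N x = (\<Sum>n<N. cf x n *\<^sub>R e n)"

definition Pr :: "nat set \<Rightarrow> 'a \<Rightarrow> 'a" where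
  "Pr J x = (\<Sum>n\<in>J. cf x n *\<^sub>R e n)"

lemma e_nz: "e n \<noteq> 0"
  using basic by (simp add: basic_sequence_def)

lemma ex_low: "\<exists>c>0. \<forall>n. c \<le> norm (e n)"
  using semi by (simp add: semi_normalized_def)

lemma ex_up: "\<exists>C>0. \<forall>n. norm (e n) \<le> C"
proof -
  obtain C where "\<forall>n. norm (e n) \<le> C" using semi by (auto simp: semi_normalized_def)
  moreover have "0 < norm (e 0)" using e_nz by simp
  ultimately show ?thesis by (metis order.strict_trans2)
qed

lemma closed_E: "closed E"
  by (simp add: cspan_def)

lemma span_sub_E: "span (range e) \<subseteq> E"
  by (simp add: cspan_def closure_subset)

lemma e_in_span: "e n \<in> span (range e)"
  by (simp add: span_base)

lemma lim_in_E:
  assumes "f \<longlonglongrightarrow> z" "\<And>n. f n \<in> E"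
  shows "z \<in> E"
  using Lim_in_closed_set[OF closed_E _ _ assms(1)] assms(2) by auto

lemma sum_in_span: "(\<Sum>n\<in>F. b n *\<^sub>R e n) \<in> span (range e)"
  by (intro span_sum span_scale e_in_span)

lemma sum_in_E: "(\<Sum>n\<in>F. b n *\<^sub>R e n) \<in> E"
  using sum_in_span span_sub_E by blast

lemma Ssum_lim: "x \<in> E \<Longrightarrow> (\<lambda>N. Ssum N x) \<longlonglongrightarrow> x"
proof -
  assume "x \<in> E"
  then have "\<exists>!a. (\<lambda>N. \<Sum>n<N. a n *\<^sub>R e n) \<longlonglongrightarrow> x"
    using basic by (simp add: basic_sequence_def)
  then have "(\<lambda>N. \<Sum>n<N. cf x n *\<^sub>R e n) \<longlonglongrightarrow> x"
    unfolding coeff_def by (rule theI')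
  then show ?thesis by (simp add: Ssum_def)
qed

lemma cf_unique:
  assumes "x \<in> E" "(\<lambda>N. \<Sum>n<N. a n *\<^sub>R e n) \<longlonglongrightarrow> x"
  shows "cf x = a"
proof -
  have u: "\<exists>!a. (\<lambda>N. \<Sum>n<N. a n *\<^sub>R e n) \<longlonglongrightarrow> x"
    using basic assms(1) by (simp add: basic_sequence_def)
  show ?thesis
    unfolding coeff_def
    by (rule the1_equality[where P="\<lambda>a. (\<lambda>N. \<Sum>n<N. a n *\<^sub>R e n) \<longlonglongrightarrow> x", OF u assms(2)])
qed

lemma Ssum_in_E: "Ssum N x \<in> E"
  unfolding Ssum_def by (rule sum_in_E)

lemma Pr_in_E: "Pr J x \<in> E"
  unfolding Pr_def by (rule sum_in_E)

lemma add_E: "x \<in> E \<Longrightarrow> y \<in> E \<Longrightarrow> x + y \<in> E \<and> cf (x + y) = (\<lambda>n. cf x n + cf y n)"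
proof -
  assume x: "x \<in> E" and y: "y \<in> E"
  have lim: "(\<lambda>N. \<Sum>n<N. (cf x n + cf y n) *\<^sub>R e n) \<longlonglongrightarrow> x + y"
    using tendsto_add[OF Ssum_lim[OF x] Ssum_lim[OF y]]
    by (simp add: Ssum_def scaleR_add_left sum.distrib)
  have xy: "x + y \<in> E"
    by (rule lim_in_E[OF lim]) (rule sum_in_E)
  then show ?thesis using cf_unique[OF xy lim] by simp
qed

lemma scale_E: "x \<in> E \<Longrightarrow> c *\<^sub>R x \<in> E \<and> cf (c *\<^sub>R x) = (\<lambda>n. c * cf x n)"
proof -
  assume x: "x \<in> E"
  have lim: "(\<lambda>N. \<Sum>n<N. (c * cf x n) *\<^sub>R e n) \<longlonglongrightarrow> c *\<^sub>R x"
    using tendsto_scaleR[OF tendsto_const[of c] Ssum_lim[OF x]]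
    by (simp add: Ssum_def scaleR_sum_right)
  have cx: "c *\<^sub>R x \<in> E"
    by (rule lim_in_E[OF lim]) (rule sum_in_E)
  then show ?thesis using cf_unique[OF cx lim] by simp
qed

lemma diff_E: "x \<in> E \<Longrightarrow> y \<in> E \<Longrightarrow> x - y \<in> E \<and> cf (x - y) = (\<lambda>n. cf x n - cf y n)"
proof -
  assume x: "x \<in> E" and y: "y \<in> E"
  have lim: "(\<lambda>N. \<Sum>n<N. (cf x n - cf y n) *\<^sub>R e n) \<longlonglongrightarrow> x - y"
    using tendsto_diff[OF Ssum_lim[OF x] Ssum_lim[OF y]]
    by (simp add: Ssum_def scaleR_diff_left sum_subtractf)
  have xy: "x - y \<in> E"
    by (rule lim_in_E[OF lim]) (rule sum_in_E)
  then show ?thesis using cf_unique[OF xy lim] by simp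
qed

lemma fin_E:
  assumes "finite F"
  shows "cf (\<Sum>n\<in>F. b n *\<^sub>R e n) = (\<lambda>n. if n \<in> F then b n else 0)"
proof (rule cf_unique[OF sum_in_E])
  obtain M where M: "F \<subseteq> {..<M}"
    using assms finite_nat_bounded by blast
  have "eventually (\<lambda>N. (\<Sum>n<N. (if n \<in> F then b n else 0) *\<^sub>R e n) = (\<Sum>n\<in>F. b n *\<^sub>R e n)) sequentially"
    using eventually_ge_at_top[of M]
  proof (rule eventually_mono)
    fix N assume "M \<le> N"
    then have FN: "F \<subseteq> {..<N}" using M by auto
    have "(\<Sum>n<N. (if n \<in> F then b n else 0) *\<^sub>R e n) = (\<Sum>n<N. if n \<in> F then b n *\<^sub>R e n else 0)"
      by (intro sum.cong) auto
    also have "\<dots> = (\<Sum>n\<in>{..<N} \<inter> F. b n *\<^sub>R e n)"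
      by (rule sum.inter_restrict[symmetric]) simp
    also have "{..<N} \<inter> F = F" using FN by auto
    finally show "(\<Sum>n<N. (if n \<in> F then b n else 0) *\<^sub>R e n) = (\<Sum>n\<in>F. b n *\<^sub>R e n)" .
  qed
  then show "(\<lambda>N. \<Sum>n<N. (if n \<in> F then b n else 0) *\<^sub>R e n) \<longlonglongrightarrow> (\<Sum>n\<in>F. b n *\<^sub>R e n)"
    by (rule tendsto_eventually)
qed

lemma cf_Pr: "finite J \<Longrightarrow> cf (Pr J x) = (\<lambda>n. if n \<in> J then cf x n else 0)"
  unfolding Pr_def by (rule fin_E)

lemma cf_Ssum: "cf (Ssum N x) = (\<lambda>n. if n < N then cf x n else 0)"
  unfolding Ssum_def using fin_E[of "{..<N}" "cf x"] by simp

lemma cf_null: "x \<in> E \<Longrightarrow> cf x \<longlonglongrightarrow> 0"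
proof -
  assume x: "x \<in> E"
  obtain c where c: "c > 0" "\<And>n. c \<le> norm (e n)" using ex_low by blast
  have d: "(\<lambda>n. Ssum (Suc n) x - Ssum n x) \<longlonglongrightarrow> x - x"
    by (intro tendsto_diff Ssum_lim[OF x] LIMSEQ_Suc)
  have lim: "(\<lambda>n. norm (Ssum (Suc n) x - Ssum n x) / c) \<longlonglongrightarrow> 0"
    using tendsto_divide[OF tendsto_norm[OF d] tendsto_const[of c]] c by simp
  have le: "\<forall>n. norm (cf x n) \<le> norm (Ssum (Suc n) x - Ssum n x) / c"
  proof
    fix n
    have "Ssum (Suc n) x - Ssum n x = cf x n *\<^sub>R e n" by (simp add: Ssum_def)
    then have eqn: "norm (Ssum (Suc n) x - Ssum n x) = \<bar>cf x n\<bar> * norm (e n)" by simp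
    have "\<bar>cf x n\<bar> * c \<le> \<bar>cf x n\<bar> * norm (e n)"
      using c(2)[of n] by (intro mult_left_mono) auto
    then have "\<bar>cf x n\<bar> * c \<le> norm (Ssum (Suc n) x - Ssum n x)" using eqn by linarith
    then show "norm (cf x n) \<le> norm (Ssum (Suc n) x - Ssum n x) / c"
      unfolding real_norm_def pos_le_divide_eq[OF c(1)] .
  qed
  show ?thesis
    by (rule Lim_null_comparison[OF always_eventually[OF le] lim])
qed

lemma zero_E: "0 \<in> E" "cf 0 = (\<lambda>n. 0)"
  using fin_E[where F="{}"] sum_in_E[where F="{}"] by auto

end


definition prec :: "(nat \<Rightarrow> real) \<Rightarrow> nat \<Rightarrow> nat \<Rightarrow> bool" where
  "prec a i j \<longleftrightarrow> \<bar>a j\<bar> < \<bar>a i\<bar> \<or> (\<bar>a i\<bar> = \<bar>a j\<bar> \<and> i < j)"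

definition pred :: "(nat \<Rightarrow> real) \<Rightarrow> nat \<Rightarrow> nat set" where
  "pred a n = {i. prec a i n}"

definition supp :: "(nat \<Rightarrow> real) \<Rightarrow> nat set" where
  "supp a = {n. a n \<noteq> 0}"

definition GS :: "(nat \<Rightarrow> real) \<Rightarrow> nat \<Rightarrow> nat set" where
  "GS a m = {n. a n \<noteq> 0 \<and> card (pred a n) < m}"

definition dc :: "(nat \<Rightarrow> real) \<Rightarrow> nat set \<Rightarrow> bool" where
  "dc a I \<longleftrightarrow> finite I \<and> I \<subseteq> supp a \<and> (\<forall>n\<in>I. \<forall>i. prec a i n \<longrightarrow> i \<in> I)"

lemma prec_irrefl: "\<not> prec a i i"
  by (auto simp: prec_def)

lemma prec_asym: "prec a i j \<Longrightarrow> \<not> prec a j i"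
  by (auto simp: prec_def)

lemma prec_trans: "prec a i j \<Longrightarrow> prec a j k \<Longrightarrow> prec a i k"
  unfolding prec_def by linarith

lemma prec_total: "i \<noteq> j \<Longrightarrow> prec a i j \<or> prec a j i"
  unfolding prec_def by linarith

lemma prec_supp: "prec a i n \<Longrightarrow> a n \<noteq> 0 \<Longrightarrow> a i \<noteq> 0"
  unfolding prec_def by auto

lemma prec_ge: "prec a i n \<Longrightarrow> \<bar>a n\<bar> \<le> \<bar>a i\<bar>"
  unfolding prec_def by auto

lemma finite_big:
  fixes a :: "nat \<Rightarrow> real"
  assumes "a \<longlonglongrightarrow> 0" "t > 0"
  shows "finite {i. t \<le> \<bar>a i\<bar>}"
proof -
  have "eventually (\<lambda>i. norm (a i) < t) sequentially"
    using assms(1)[unfolded tendsto_iff] assms(2) by (simp add: dist_real_def)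
  then obtain N where N: "\<And>i. N \<le> i \<Longrightarrow> \<bar>a i\<bar> < t"
    unfolding eventually_sequentially by auto
  have "{i. t \<le> \<bar>a i\<bar>} \<subseteq> {..<N}"
    using N by (auto simp: not_less[symmetric])
  then show ?thesis using finite_subset by blast
qed

lemma finite_pred:
  assumes "a \<longlonglongrightarrow> 0" "a n \<noteq> 0"
  shows "finite (pred a n)"
proof -
  have "pred a n \<subseteq> {i. \<bar>a n\<bar> \<le> \<bar>a i\<bar>}"
    by (auto simp: pred_def dest: prec_ge)
  moreover have "finite {i. \<bar>a n\<bar> \<le> \<bar>a i\<bar>}"
    using finite_big[OF assms(1)] assms(2) by simp
  ultimately show ?thesis using finite_subset by blast
qed

lemma pred_psubset:
  assumes "prec a i n"
  shows "pred a i \<subset> pred a n"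
proof
  show "pred a i \<subseteq> pred a n"
    using assms by (auto simp: pred_def intro: prec_trans)
  have "i \<in> pred a n" "i \<notin> pred a i"
    using assms by (auto simp: pred_def prec_irrefl)
  then show "pred a i \<noteq> pred a n" by blast
qed

lemma card_pred_less:
  assumes "a \<longlonglongrightarrow> 0" "prec a i n" "a n \<noteq> 0"
  shows "card (pred a i) < card (pred a n)"
  by (rule psubset_card_mono[OF finite_pred[OF assms(1,3)] pred_psubset[OF assms(2)]])

lemma inj_card_pred:
  assumes "a \<longlonglongrightarrow> 0"
  shows "inj_on (\<lambda>n. card (pred a n)) (supp a)"
proof (rule inj_onI)
  fix i j assume i: "i \<in> supp a" and j: "j \<in> supp a" and eq: "card (pred a i) = card (pred a j)"
  show "i = j"
  proof (rule ccontr)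
    assume "i \<noteq> j"
    then have "prec a i j \<or> prec a j i" by (rule prec_total)
    then show False
      using card_pred_less[OF assms, of i j] card_pred_less[OF assms, of j i] i j eq
      by (auto simp: supp_def)
  qed
qed

lemma GS_sub_supp: "GS a m \<subseteq> supp a"
  by (auto simp: GS_def supp_def)

lemma finite_GS:
  assumes "a \<longlonglongrightarrow> 0"
  shows "finite (GS a m)"
proof -
  have "GS a m \<subseteq> (\<lambda>n. card (pred a n)) -` {..<m} \<inter> supp a"
    by (auto simp: GS_def supp_def)
  moreover have "finite ((\<lambda>n. card (pred a n)) -` {..<m} \<inter> supp a)"
    by (rule finite_vimage_IntI[OF _ inj_card_pred[OF assms]]) simp
  ultimately show ?thesis using finite_subset by blast
qed

lemma card_GS:
  assumes "a \<longlonglongrightarrow> 0"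
  shows "card (GS a m) \<le> m"
proof -
  have "inj_on (\<lambda>n. card (pred a n)) (GS a m)"
    using inj_card_pred[OF assms] GS_sub_supp inj_on_subset by blast
  moreover have "(\<lambda>n. card (pred a n)) ` GS a m \<subseteq> {..<m}"
    by (auto simp: GS_def)
  ultimately have "card (GS a m) \<le> card {..<m}"
    by (intro card_inj_on_le) auto
  then show ?thesis by simp
qed

lemma dc_GS:
  assumes "a \<longlonglongrightarrow> 0"
  shows "dc a (GS a m)"
  unfolding dc_def
proof (intro conjI ballI allI impI)
  show "finite (GS a m)" by (rule finite_GS[OF assms])
  show "GS a m \<subseteq> supp a" by (rule GS_sub_supp)
  fix n i assume n: "n \<in> GS a m" and p: "prec a i n"
  then have "a n \<noteq> 0" "card (pred a n) < m" by (auto simp: GS_def)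
  then show "i \<in> GS a m"
    using card_pred_less[OF assms p] prec_supp[OF p] by (auto simp: GS_def)
qed

lemma GS_card_dc:
  assumes "a \<longlonglongrightarrow> 0" "dc a I"
  shows "GS a (card I) = I"
proof
  have fin: "finite I" and sub: "I \<subseteq> supp a" and down: "\<And>n i. n \<in> I \<Longrightarrow> prec a i n \<Longrightarrow> i \<in> I"
    using assms(2) by (auto simp: dc_def)
  show "I \<subseteq> GS a (card I)"
  proof
    fix n assume n: "n \<in> I"
    have "pred a n \<subseteq> I" using down n by (auto simp: pred_def)
    moreover have "n \<notin> pred a n" by (simp add: pred_def prec_irrefl)
    ultimately have "pred a n \<subset> I" using n by blast
    then have "card (pred a n) < card I" by (rule psubset_card_mono[OF fin])
    then show "n \<in> GS a (card I)" using n sub by (auto simp: GS_def supp_def)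
  qed
  show "GS a (card I) \<subseteq> I"
  proof
    fix n assume n: "n \<in> GS a (card I)"
    then have nz: "a n \<noteq> 0" and c: "card (pred a n) < card I" by (auto simp: GS_def)
    show "n \<in> I"
    proof (rule ccontr)
      assume nI: "n \<notin> I"
      have "I \<subseteq> pred a n"
      proof
        fix i assume i: "i \<in> I"
        then have "i \<noteq> n" using nI by blast
        then have "prec a i n \<or> prec a n i" by (rule prec_total)
        then show "i \<in> pred a n" using down[OF i] nI by (auto simp: pred_def)
      qed
      then have "card I \<le> card (pred a n)"
        by (rule card_mono[OF finite_pred[OF assms(1) nz]])
      then show False using c by simp
    qed
  qed
qed

lemma GS_mono: "m \<le> m' \<Longrightarrow> GS a m \<subseteq> GS a m'"
  by (auto simp: GS_def)

lemma in_GS_eventually: "a n \<noteq> 0 \<Longrightarrow> card (pred a n) < m \<Longrightarrow> n \<in> GS a m"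
  by (simp add: GS_def)

lemma GS_zero: "GS a 0 = {}"
  by (simp add: GS_def)

definition restr :: "nat set \<Rightarrow> (nat \<Rightarrow> real) \<Rightarrow> nat \<Rightarrow> real" where
  "restr S a = (\<lambda>n. if n \<in> S then a n else 0)"

lemma dc_restr:
  assumes "dc a I"
  shows "dc (restr S a) (I \<inter> S)"
  unfolding dc_def
proof (intro conjI ballI allI impI)
  have fin: "finite I" and sub: "I \<subseteq> supp a" and down: "\<And>n i. n \<in> I \<Longrightarrow> prec a i n \<Longrightarrow> i \<in> I"
    using assms by (auto simp: dc_def)
  show "finite (I \<inter> S)" using fin by simp
  show "I \<inter> S \<subseteq> supp (restr S a)"
  proof
    fix n assume n: "n \<in> I \<inter> S"
    then have "a n \<noteq> 0" using sub by (auto simp: supp_def)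
    then show "n \<in> supp (restr S a)" using n by (simp add: supp_def restr_def)
  qed
  fix n i assume n: "n \<in> I \<inter> S" and p: "prec (restr S a) i n"
  have nS: "n \<in> S" and nI: "n \<in> I" using n by auto
  have eqn: "restr S a n = a n" using nS by (simp add: restr_def)
  have "a n \<noteq> 0" using sub nI by (auto simp: supp_def)
  then have nz: "restr S a n \<noteq> 0" using eqn by simp
  have iz: "restr S a i \<noteq> 0" by (rule prec_supp[OF p nz])
  have iS: "i \<in> S"
  proof (rule ccontr)
    assume "i \<notin> S"
    then have "restr S a i = 0" by (simp add: restr_def)
    with iz show False by simp
  qed
  have eqi: "restr S a i = a i" using iS by (simp add: restr_def)
  have "prec a i n" using p unfolding prec_def eqn eqi .
  then show "i \<in> I \<inter> S" using down[OF nI] iS by blast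
qed

lemma restr_null: "a \<longlonglongrightarrow> 0 \<Longrightarrow> restr S a \<longlonglongrightarrow> 0"
proof -
  assume a: "a \<longlonglongrightarrow> 0"
  have le: "\<forall>n. norm (restr S a n) \<le> norm (a n)" by (simp add: restr_def)
  have lim: "(\<lambda>n. norm (a n)) \<longlonglongrightarrow> 0" using tendsto_norm[OF a] by simp
  show ?thesis by (rule Lim_null_comparison[OF always_eventually[OF le] lim])
qed

lemma prec_scale: "s \<noteq> 0 \<Longrightarrow> prec (\<lambda>n. s * a n) = prec a"
  by (auto simp: prec_def abs_mult intro!: ext)

lemma GS_scale: "s \<noteq> 0 \<Longrightarrow> GS (\<lambda>n. s * a n) = GS a"
  by (auto simp: GS_def pred_def prec_scale intro!: ext)

definition pick :: "(nat \<Rightarrow> real) \<Rightarrow> nat set \<Rightarrow> nat" where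
  "pick a F = (LEAST n. n \<notin> F \<and> (\<forall>i. i \<notin> F \<longrightarrow> \<bar>a i\<bar> \<le> \<bar>a n\<bar>))"

primrec chosen :: "(nat \<Rightarrow> real) \<Rightarrow> nat \<Rightarrow> nat set" where
  "chosen a 0 = {}"
| "chosen a (Suc k) = insert (pick a (chosen a k)) (chosen a k)"

definition gord :: "(nat \<Rightarrow> real) \<Rightarrow> nat \<Rightarrow> nat" where
  "gord a k = pick a (chosen a k)"

lemma pick_ex:
  fixes a :: "nat \<Rightarrow> real"
  assumes "a \<longlonglongrightarrow> 0" "finite F"
  shows "\<exists>n. n \<notin> F \<and> (\<forall>i. i \<notin> F \<longrightarrow> \<bar>a i\<bar> \<le> \<bar>a n\<bar>)"
proof (cases "\<exists>j. j \<notin> F \<and> a j \<noteq> 0")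
  case True
  then obtain j where j: "j \<notin> F" "a j \<noteq> 0" by blast
  define T where "T = {i. i \<notin> F \<and> \<bar>a j\<bar> \<le> \<bar>a i\<bar>}"
  have "T \<subseteq> {i. \<bar>a j\<bar> \<le> \<bar>a i\<bar>}" by (auto simp: T_def)
  moreover have "finite {i. \<bar>a j\<bar> \<le> \<bar>a i\<bar>}"
    using j(2) by (intro finite_big[OF assms(1)]) simp
  ultimately have finT: "finite T" by (rule finite_subset)
  have jT: "j \<in> T" using j by (simp add: T_def)
  define M where "M = Max ((\<lambda>i. \<bar>a i\<bar>) ` T)"
  have "M \<in> (\<lambda>i. \<bar>a i\<bar>) ` T" unfolding M_def using finT jT by (intro Max_in) auto
  then obtain n where nT: "n \<in> T" and nM: "M = \<bar>a n\<bar>" by blast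
  have Mge: "\<bar>a i\<bar> \<le> M" if "i \<in> T" for i
    unfolding M_def using finT that by (intro Max_ge) auto
  have nF: "n \<notin> F" and jn: "\<bar>a j\<bar> \<le> \<bar>a n\<bar>" using nT by (auto simp: T_def)
  have "\<bar>a i\<bar> \<le> \<bar>a n\<bar>" if i: "i \<notin> F" for i
  proof (cases "\<bar>a j\<bar> \<le> \<bar>a i\<bar>")
    case True
    then have "i \<in> T" using i by (simp add: T_def)
    then have "\<bar>a i\<bar> \<le> M" by (rule Mge)
    then show ?thesis using nM by simp
  next
    case False
    then show ?thesis using jn by simp
  qed
  then show ?thesis using nF by blast
next
  case False
  obtain n where nF: "n \<notin> F" using ex_new_if_finite[OF infinite_UNIV_nat assms(2)] by blast
  have "\<bar>a i\<bar> \<le> \<bar>a n\<bar>" if "i \<notin> F" for i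
  proof -
    have "a i = 0" using False that by blast
    then show ?thesis by simp
  qed
  then show ?thesis using nF by blast
qed

lemma pick_prop:
  assumes "a \<longlonglongrightarrow> 0" "finite F"
  shows "pick a F \<notin> F" "\<And>i. i \<notin> F \<Longrightarrow> \<bar>a i\<bar> \<le> \<bar>a (pick a F)\<bar>"
  using LeastI_ex[OF pick_ex[OF assms]] unfolding pick_def by auto

lemma pick_least:
  assumes "n \<notin> F" "\<And>i. i \<notin> F \<Longrightarrow> \<bar>a i\<bar> \<le> \<bar>a n\<bar>"
  shows "pick a F \<le> n"
  unfolding pick_def by (rule Least_le) (use assms in auto)

lemma chosen_eq: "chosen a k = gord a ` {..<k}"
  by (induction k) (auto simp: gord_def lessThan_Suc)

lemma finite_chosen: "finite (chosen a k)"
  by (simp add: chosen_eq)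

lemma chosen_mono: "j \<le> k \<Longrightarrow> chosen a j \<subseteq> chosen a k"
  by (auto simp: chosen_eq)

lemma gord_notin:
  assumes "a \<longlonglongrightarrow> 0"
  shows "gord a k \<notin> chosen a k"
  unfolding gord_def by (rule pick_prop(1)[OF assms finite_chosen])

lemma gord_inj:
  assumes "a \<longlonglongrightarrow> 0"
  shows "inj (gord a)"
proof (rule injI)
  have *: "gord a j \<noteq> gord a k" if "j < k" for j k
  proof -
    have "gord a j \<in> chosen a k" using that by (auto simp: chosen_eq)
    then show ?thesis using gord_notin[OF assms, of k] by auto
  qed
  fix j k assume "gord a j = gord a k"
  then show "j = k" using *[of j k] *[of k j] by (cases j k rule: linorder_cases) auto
qed

lemma gord_natural:
  assumes "a \<longlonglongrightarrow> 0"
  shows "inj (gord a) \<and> {n. a n \<noteq> 0} \<subseteq> range (gord a) \<and>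
     (\<forall>j k. j < k \<longrightarrow>
        \<bar>a (gord a j)\<bar> > \<bar>a (gord a k)\<bar> \<or>
        (\<bar>a (gord a j)\<bar> = \<bar>a (gord a k)\<bar> \<and> gord a j < gord a k))"
proof (intro conjI allI impI)
  show inj: "inj (gord a)" by (rule gord_inj[OF assms])
  show "{n. a n \<noteq> 0} \<subseteq> range (gord a)"
  proof
    fix n assume "n \<in> {n. a n \<noteq> 0}"
    then have nz: "a n \<noteq> 0" by simp
    show "n \<in> range (gord a)"
    proof (rule ccontr)
      assume nr: "n \<notin> range (gord a)"
      have "n \<notin> chosen a k" for k using nr by (auto simp: chosen_eq)
      then have "\<bar>a n\<bar> \<le> \<bar>a (gord a k)\<bar>" for k
        unfolding gord_def by (rule pick_prop(2)[OF assms finite_chosen])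
      then have "range (gord a) \<subseteq> {i. \<bar>a n\<bar> \<le> \<bar>a i\<bar>}" by auto
      moreover have "finite {i. \<bar>a n\<bar> \<le> \<bar>a i\<bar>}"
        using finite_big[OF assms, of "\<bar>a n\<bar>"] nz by simp
      ultimately have "finite (range (gord a))" using finite_subset by blast
      then show False using range_inj_infinite[OF inj] by simp
    qed
  qed
  fix j k :: nat assume jk: "j < k"
  have kj: "gord a k \<notin> chosen a j"
    using gord_notin[OF assms, of k] chosen_mono[of j k a] jk by auto
  have le: "\<bar>a (gord a k)\<bar> \<le> \<bar>a (gord a j)\<bar>"
    unfolding gord_def[of a j] by (rule pick_prop(2)[OF assms finite_chosen kj])
  have ne: "gord a j \<noteq> gord a k" using inj jk by (auto dest: injD)
  show "\<bar>a (gord a j)\<bar> > \<bar>a (gord a k)\<bar> \<or>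
        (\<bar>a (gord a j)\<bar> = \<bar>a (gord a k)\<bar> \<and> gord a j < gord a k)"
  proof (cases "\<bar>a (gord a k)\<bar> = \<bar>a (gord a j)\<bar>")
    case True
    have "\<And>i. i \<notin> chosen a j \<Longrightarrow> \<bar>a i\<bar> \<le> \<bar>a (gord a k)\<bar>"
      using pick_prop(2)[OF assms finite_chosen] True unfolding gord_def by metis
    then have "gord a j \<le> gord a k"
      unfolding gord_def[of a j] by (rule pick_least[OF kj])
    then show ?thesis using True ne by auto
  next
    case False
    then show ?thesis using le by auto
  qed
qed


context bseq
begin

lemma natural_exists: "x \<in> E \<Longrightarrow> is_natural_greedy_ordering e x (greedy_ordering e x)"
proof -
  assume x: "x \<in> E"
  have "is_natural_greedy_ordering e x (gord (cf x))"
    unfolding is_natural_greedy_ordering_def using gord_natural[OF cf_null[OF x]] by blast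
  then show ?thesis unfolding greedy_ordering_def
    by (rule someI[where P="is_natural_greedy_ordering e x"])
qed

lemma pred_natural:
  assumes x: "x \<in> E" and rho: "is_natural_greedy_ordering e x \<rho>" and nz: "cf x (\<rho> k) \<noteq> 0"
  shows "pred (cf x) (\<rho> k) = \<rho> ` {..<k}"
proof
  have inj: "inj \<rho>" and sub: "{n. cf x n \<noteq> 0} \<subseteq> range \<rho>"
    and ord: "\<And>j k. j < k \<Longrightarrow> \<bar>cf x (\<rho> j)\<bar> > \<bar>cf x (\<rho> k)\<bar> \<or>
        (\<bar>cf x (\<rho> j)\<bar> = \<bar>cf x (\<rho> k)\<bar> \<and> \<rho> j < \<rho> k)"
    using rho unfolding is_natural_greedy_ordering_def by blast+
  have pr: "prec (cf x) (\<rho> j) (\<rho> k)" if "j < k" for j k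
    using ord[OF that] unfolding prec_def by auto
  show "\<rho> ` {..<k} \<subseteq> pred (cf x) (\<rho> k)"
    using pr by (auto simp: pred_def)
  show "pred (cf x) (\<rho> k) \<subseteq> \<rho> ` {..<k}"
  proof
    fix i assume "i \<in> pred (cf x) (\<rho> k)"
    then have p: "prec (cf x) i (\<rho> k)" by (simp add: pred_def)
    then have "cf x i \<noteq> 0" using prec_supp nz by blast
    then obtain j where j: "i = \<rho> j" using sub by blast
    have "j \<noteq> k" using p j prec_irrefl by blast
    moreover have "\<not> k < j" using pr[of k j] p j prec_asym by blast
    ultimately have "j < k" by simp
    then show "i \<in> \<rho> ` {..<k}" using j by blast
  qed
qed

lemma natural_char:
  assumes x: "x \<in> E" and rho: "is_natural_greedy_ordering e x \<rho>"
  shows "\<rho> ` {..<m} \<inter> supp (cf x) = GS (cf x) m"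
proof -
  have inj: "inj \<rho>" and sub: "{n. cf x n \<noteq> 0} \<subseteq> range \<rho>"
    using rho unfolding is_natural_greedy_ordering_def by blast+
  have cardk: "card (pred (cf x) (\<rho> k)) = k" if "cf x (\<rho> k) \<noteq> 0" for k
  proof -
    have "card (pred (cf x) (\<rho> k)) = card (\<rho> ` {..<k})"
      by (simp add: pred_natural[OF x rho that])
    also have "\<dots> = k"
      using inj by (simp add: card_image inj_on_subset)
    finally show ?thesis .
  qed
  show ?thesis
  proof
    show "\<rho> ` {..<m} \<inter> supp (cf x) \<subseteq> GS (cf x) m"
    proof
      fix n assume "n \<in> \<rho> ` {..<m} \<inter> supp (cf x)"
      then obtain k where k: "k < m" "n = \<rho> k" and nz: "cf x n \<noteq> 0" by (auto simp: supp_def)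
      then have "card (pred (cf x) n) = k" using cardk by blast
      then show "n \<in> GS (cf x) m" using k nz by (simp add: GS_def)
    qed
    show "GS (cf x) m \<subseteq> \<rho> ` {..<m} \<inter> supp (cf x)"
    proof
      fix n assume n: "n \<in> GS (cf x) m"
      then have nz: "cf x n \<noteq> 0" and c: "card (pred (cf x) n) < m" by (auto simp: GS_def)
      then obtain k where k: "n = \<rho> k" using sub by blast
      then have "card (pred (cf x) n) = k" using cardk nz by blast
      then show "n \<in> \<rho> ` {..<m} \<inter> supp (cf x)" using k c nz by (auto simp: supp_def)
    qed
  qed
qed

lemma greedy_sum_eq:
  assumes x: "x \<in> E"
  shows "greedy_sum e m x = Pr (GS (cf x) m) x"
proof -
  let ?r = "greedy_ordering e x"
  have rho: "is_natural_greedy_ordering e x ?r" by (rule natural_exists[OF x])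
  then have inj: "inj ?r" by (simp add: is_natural_greedy_ordering_def)
  let ?g = "\<lambda>n. cf x n *\<^sub>R e n"
  have "greedy_sum e m x = (\<Sum>k<m. ?g (?r k))"
    by (simp add: greedy_sum_def)
  also have "\<dots> = sum ?g (?r ` {..<m})"
    by (rule sum.reindex[symmetric, unfolded comp_def]) (rule inj_on_subset[OF inj], simp)
  also have "\<dots> = sum ?g (?r ` {..<m} \<inter> supp (cf x))"
    by (rule sum.mono_neutral_right) (auto simp: supp_def)
  also have "\<dots> = Pr (GS (cf x) m) x"
    by (simp add: natural_char[OF x rho] Pr_def)
  finally show ?thesis .
qed

lemma greedy_dc:
  assumes x: "x \<in> E" and d: "dc (cf x) I"
  shows "Pr I x = greedy_sum e (card I) x"
  using greedy_sum_eq[OF x] GS_card_dc[OF cf_null[OF x] d] by simp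

lemma greedy_in_E: "greedy_sum e m x \<in> E"
  unfolding greedy_sum_def
  by (rule subsetD[OF span_sub_E]) (intro span_sum span_scale e_in_span)

lemma Pr_diff_cf:
  assumes x: "x \<in> E" and F: "finite F"
  shows "x - Pr F x \<in> E" "cf (x - Pr F x) = restr (- F) (cf x)"
proof -
  show "x - Pr F x \<in> E" using diff_E[OF x Pr_in_E] by blast
  have "cf (x - Pr F x) = (\<lambda>n. cf x n - cf (Pr F x) n)" using diff_E[OF x Pr_in_E] by blast
  then show "cf (x - Pr F x) = restr (- F) (cf x)"
    by (auto simp: cf_Pr[OF F] restr_def intro!: ext)
qed

lemma Pr_restr:
  assumes "cf z = restr S (cf x)" "finite J"
  shows "Pr J z = Pr (J \<inter> S) x"
proof -
  have "Pr J z = (\<Sum>n\<in>J. (if n \<in> S then cf x n *\<^sub>R e n else 0))"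
    unfolding Pr_def assms restr_def by (intro sum.cong) auto
  also have "\<dots> = Pr (J \<inter> S) x"
    by (simp add: Pr_def sum.inter_restrict[OF assms(2), symmetric])
  finally show ?thesis .
qed

end


lemma le_sum_nonneg:
  fixes f :: "'b \<Rightarrow> 'a::banach_lattice"
  assumes "finite A" "i \<in> A" "\<And>j. j \<in> A \<Longrightarrow> 0 \<le> f j"
  shows "f i \<le> sum f A"
proof -
  have "sum f A = f i + sum f (A - {i})" by (rule sum.remove[OF assms(1,2)])
  moreover have "0 \<le> sum f (A - {i})" using assms(3) by (intro sum_nonneg) auto
  ultimately show ?thesis by simp
qed

lemma eps_nonneg:
  fixes \<epsilon> :: "nat \<Rightarrow> real"
  assumes "antimono \<epsilon>" "\<epsilon> \<longlonglongrightarrow> 0"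
  shows "0 \<le> \<epsilon> k"
proof (rule LIMSEQ_le_const2[OF assms(2)])
  show "\<exists>N. \<forall>n\<ge>N. \<epsilon> n \<le> \<epsilon> k" using assms(1) by (auto simp: antimono_def)
qed

lemma u_conv_imp_o_conv:
  fixes xs :: "nat \<Rightarrow> 'a::banach_lattice"
  assumes "u_conv xs x"
  shows "o_conv xs x"
proof -
  obtain u :: 'a and \<epsilon> :: "nat \<Rightarrow> real" where u: "0 \<le> u" and am: "antimono \<epsilon>" and lim: "\<epsilon> \<longlonglongrightarrow> 0"
    and dom: "\<And>k. \<exists>nk. \<forall>n\<ge>nk. labs (xs n - x) \<le> \<epsilon> k *\<^sub>R u"
    using assms unfolding u_conv_def by blast
  have epos: "0 \<le> \<epsilon> k" for k by (rule eps_nonneg[OF am lim])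
  define D where "D = range (\<lambda>k. \<epsilon> k *\<^sub>R u)"
  have "D \<noteq> {}" by (simp add: D_def)
  moreover have "\<forall>a\<in>D. \<forall>b\<in>D. \<exists>c\<in>D. c \<le> a \<and> c \<le> b"
  proof (intro ballI)
    fix a b assume "a \<in> D" "b \<in> D"
    then obtain i j where ij: "a = \<epsilon> i *\<^sub>R u" "b = \<epsilon> j *\<^sub>R u" by (auto simp: D_def)
    have "\<epsilon> (max i j) \<le> \<epsilon> i" "\<epsilon> (max i j) \<le> \<epsilon> j"
      using am by (auto simp: antimono_def)
    then have "\<epsilon> (max i j) *\<^sub>R u \<le> a" "\<epsilon> (max i j) *\<^sub>R u \<le> b"
      using ij u by (auto intro: scaleR_right_mono)
    then show "\<exists>c\<in>D. c \<le> a \<and> c \<le> b" by (auto simp: D_def)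
  qed
  moreover have "\<forall>d\<in>D. 0 \<le> d"
    using epos u by (auto simp: D_def intro: scaleR_nonneg_nonneg)
  moreover have "\<forall>z. (\<forall>d\<in>D. z \<le> d) \<longrightarrow> z \<le> 0"
  proof (intro allI impI)
    fix z assume zd: "\<forall>d\<in>D. z \<le> d"
    define p where "p = sup z 0"
    have p0: "0 \<le> p" by (simp add: p_def)
    have pk: "p \<le> \<epsilon> k *\<^sub>R u" for k
      using zd epos u unfolding p_def D_def by (auto intro: scaleR_nonneg_nonneg)
    have "norm p \<le> \<epsilon> k * norm u" for k
    proof -
      have "norm p \<le> norm (\<epsilon> k *\<^sub>R u)" by (rule norm_mono_nonneg[OF p0 pk])
      then show ?thesis using epos[of k] by simp
    qed
    moreover have "(\<lambda>k. \<epsilon> k * norm u) \<longlonglongrightarrow> 0"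
      using tendsto_mult[OF lim tendsto_const[of "norm u"]] by simp
    ultimately have "norm p \<le> 0"
      by (intro LIMSEQ_le_const[of "\<lambda>k. \<epsilon> k * norm u"]) auto
    then have "p = 0" by simp
    then show "z \<le> 0" unfolding p_def by (metis sup.cobounded1)
  qed
  moreover have "\<forall>d\<in>D. \<exists>nd. \<forall>n \<ge> nd. labs (xs n - x) \<le> d"
    using dom by (auto simp: D_def)
  ultimately show ?thesis unfolding o_conv_def by blast
qed

lemma o_conv_bounded:
  fixes xs :: "nat \<Rightarrow> 'a::banach_lattice"
  assumes "o_conv xs x"
  shows "\<exists>u. \<forall>m. labs (xs m) \<le> u"
proof -
  obtain D where ne: "D \<noteq> {}" and pos: "\<forall>d\<in>D. 0 \<le> d"
    and dom: "\<forall>d\<in>D. \<exists>nd. \<forall>n \<ge> nd. labs (xs n - x) \<le> d"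
    using assms unfolding o_conv_def by blast
  obtain d where d: "d \<in> D" using ne by blast
  obtain nd where nd: "\<And>n. n \<ge> nd \<Longrightarrow> labs (xs n - x) \<le> d" using dom d by blast
  define u where "u = labs x + d + (\<Sum>n<nd. labs (xs n))"
  have S0: "0 \<le> (\<Sum>n<nd. labs (xs n))" by (intro sum_nonneg labs_nonneg)
  have d0: "0 \<le> d" using pos d by blast
  have "labs (xs m) \<le> u" for m
  proof (cases "m < nd")
    case True
    then have "labs (xs m) \<le> (\<Sum>n<nd. labs (xs n))"
      by (intro le_sum_nonneg labs_nonneg) auto
    moreover have "0 \<le> labs x + d" using d0 labs_nonneg[of x] by (rule add_nonneg_nonneg[rotated])
    ultimately show ?thesis unfolding u_def
      by (metis add_increasing)
  next
    case False
    have "labs (xs m) = labs ((xs m - x) + x)" by simp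
    also have "\<dots> \<le> labs (xs m - x) + labs x" by (rule labs_triangle)
    also have "\<dots> \<le> d + labs x" using nd False by (simp add: add_right_mono)
    also have "\<dots> \<le> u" unfolding u_def using S0 by (simp add: add.commute add_increasing2)
    finally show ?thesis .
  qed
  then show ?thesis by blast
qed

context bseq
begin

definition Phi :: "'a \<Rightarrow> nat \<Rightarrow> 'a" where
  "Phi x m = Sup_fin ((\<lambda>n. labs (greedy_sum e n x)) ` {1..m})"

lemma greedy_zero: "greedy_sum e 0 x = 0"
  by (simp add: greedy_sum_def)

lemma Phi_ge: "n \<le> m \<Longrightarrow> 1 \<le> m \<Longrightarrow> labs (greedy_sum e n x) \<le> Phi x m"
proof -
  assume nm: "n \<le> m" and m: "1 \<le> m"
  have ge1: "labs (greedy_sum e k x) \<le> Phi x m" if "1 \<le> k" "k \<le> m" for k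
    unfolding Phi_def by (rule Sup_fin_ge) (use that in auto)
  show ?thesis
  proof (cases "n = 0")
    case True
    have "0 \<le> labs (greedy_sum e 1 x)" by (rule labs_nonneg)
    also have "\<dots> \<le> Phi x m" using ge1[of 1] m by simp
    finally show ?thesis using True by (simp add: greedy_zero)
  next
    case False
    then show ?thesis using ge1 nm by simp
  qed
qed

lemma Phi_nonneg: "1 \<le> m \<Longrightarrow> 0 \<le> Phi x m"
  using Phi_ge[of 0 m x] by (simp add: greedy_zero)

lemma Phi_le: "1 \<le> m \<Longrightarrow> (\<And>n. 1 \<le> n \<Longrightarrow> n \<le> m \<Longrightarrow> labs (greedy_sum e n x) \<le> u) \<Longrightarrow> Phi x m \<le> u"
  unfolding Phi_def by (rule Sup_fin_le) auto

lemma iii_iv: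
  assumes "\<forall>m. labs (greedy_sum e m x) \<le> u" "1 \<le> m"
  shows "norm (Phi x m) \<le> norm u"
  by (rule norm_mono_nonneg[OF Phi_nonneg[OF assms(2)] Phi_le[OF assms(2)]]) (use assms in auto)

lemma Ssum_Pr: "Ssum N x = Pr {..<N} x"
  by (simp add: Ssum_def Pr_def)

lemma Pr_supp: "finite A \<Longrightarrow> Pr A x = Pr (A \<inter> supp (cf x)) x"
  unfolding Pr_def by (rule sum.mono_neutral_right) (auto simp: supp_def)

lemma Pr_split: "finite A \<Longrightarrow> Pr A x = Pr (A \<inter> B) x + Pr (A - B) x"
  unfolding Pr_def by (rule sum.Int_Diff)

lemma strict_mono_interval:
  fixes M :: "nat \<Rightarrow> nat"
  assumes sm: "strict_mono M" and n: "M k \<le> n"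
  shows "\<exists>j. k \<le> j \<and> M j \<le> n \<and> n < M (Suc j)"
proof -
  define J where "J = {j. M j \<le> n}"
  have "J \<subseteq> {..n}"
  proof
    fix j assume "j \<in> J"
    then have "M j \<le> n" by (simp add: J_def)
    moreover have "j \<le> M j" by (rule strict_mono_imp_increasing[OF sm])
    ultimately show "j \<in> {..n}" by simp
  qed
  then have fin: "finite J" by (rule finite_subset) simp
  have kJ: "k \<in> J" using n by (simp add: J_def)
  define j where "j = Max J"
  have jJ: "j \<in> J" unfolding j_def using fin kJ by (intro Max_in) auto
  have kj: "k \<le> j" unfolding j_def using fin kJ by (rule Max_ge)
  have "Suc j \<notin> J"
  proof
    assume h: "Suc j \<in> J"
    have "Suc j \<le> Max J" by (rule Max_ge[OF fin h])
    then show False by (simp add: j_def)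
  qed
  then show ?thesis using jJ kj by (auto simp: J_def not_le)
qed

lemma v_imp_i:
  assumes C: "\<forall>y\<in>E. \<forall>m\<ge>1. norm (Phi y m) \<le> C * norm y" and x: "x \<in> E"
  shows "u_conv (\<lambda>m. greedy_sum e m x) x"
proof -
  define a where "a = cf x"
  have anull: "a \<longlonglongrightarrow> 0" using cf_null[OF x] by (simp add: a_def)
  have C0: "0 \<le> C"
  proof -
    have e0: "e 0 \<in> E" using span_sub_E e_in_span by blast
    have "0 \<le> norm (Phi (e 0) 1)" by simp
    also have "\<dots> \<le> C * norm (e 0)" using C e0 by simp
    finally have "0 \<le> C * norm (e 0)" .
    moreover have "0 < norm (e 0)" using e_nz by simp
    ultimately show ?thesis by (simp add: zero_le_mult_iff)
  qed
  have "\<exists>N. norm (x - Ssum N x) \<le> (1/4::real)^j" for j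
  proof -
    have "eventually (\<lambda>N. dist (Ssum N x) x < (1/4::real)^j) sequentially"
      using Ssum_lim[OF x, unfolded tendsto_iff] by simp
    then obtain N where "dist (Ssum N x) x < (1/4::real)^j"
      unfolding eventually_sequentially by blast
    then have "norm (x - Ssum N x) \<le> (1/4::real)^j" by (simp add: dist_norm norm_minus_commute)
    then show ?thesis by blast
  qed
  then obtain N where N: "\<And>j. norm (x - Ssum (N j) x) \<le> (1/4::real)^j" by metis
  define F where "F j = {..<N j}" for j
  have finF: "finite (F j)" for j by (simp add: F_def)
  define z where "z j = x - Pr (F j) x" for j
  have zE: "z j \<in> E" for j unfolding z_def by (rule Pr_diff_cf(1)[OF x finF])
  have cfz: "cf (z j) = restr (- F j) a" for j unfolding z_def a_def by (rule Pr_diff_cf(2)[OF x finF])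
  have zn: "norm (z j) \<le> (1/4::real)^j" for j
    using N[of j] by (simp add: z_def F_def Ssum_Pr)
  define M' where "M' j = (\<Sum>n\<in>F j. Suc (card (pred a n)))" for j
  have M'prop: "n \<in> GS a m" if "n \<in> F j" "a n \<noteq> 0" "M' j \<le> m" for n j m
  proof -
    have "Suc (card (pred a n)) \<le> M' j"
      unfolding M'_def by (rule member_le_sum) (use that finF in auto)
    then show ?thesis using that by (intro in_GS_eventually) auto
  qed
  define M where "M j = (\<Sum>i\<le>j. M' i) + j" for j
  have Msuc: "M j < M (Suc j)" for j by (simp add: M_def)
  then have smM: "strict_mono M" by (rule strict_monoI_Suc)
  have M'M: "M' j \<le> M j" for j
  proof -
    have "M' j \<le> (\<Sum>i\<le>j. M' i)" by (rule member_le_sum) auto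
    then show ?thesis by (simp add: M_def)
  qed
  define w where "w j = labs (z j) + Phi (z j) (M (Suc j))" for j
  have M1: "1 \<le> M (Suc j)" for j using Msuc[of j] by simp
  have wpos: "0 \<le> w j" for j
    unfolding w_def by (intro add_nonneg_nonneg labs_nonneg Phi_nonneg M1)
  have wn: "norm (w j) \<le> (1 + C) * (1/4::real)^j" for j
  proof -
    have "norm (w j) \<le> norm (labs (z j)) + norm (Phi (z j) (M (Suc j)))"
      unfolding w_def by (rule norm_triangle_ineq)
    also have "\<dots> \<le> norm (z j) + C * norm (z j)"
      using C zE M1 by (simp add: norm_labs)
    also have "\<dots> = (1 + C) * norm (z j)" by (simp add: algebra_simps)
    also have "\<dots> \<le> (1 + C) * (1/4::real)^j"
      using zn C0 by (intro mult_left_mono) auto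
    finally show ?thesis .
  qed
  have key: "labs (greedy_sum e m x - x) \<le> w j" if mj: "M j \<le> m" "m < M (Suc j)" for m j
  proof -
    let ?G = "GS a m"
    have finG: "finite ?G" by (rule finite_GS[OF anull])
    have sub: "F j \<inter> supp a \<subseteq> ?G"
    proof
      fix n assume "n \<in> F j \<inter> supp a"
      then have n: "n \<in> F j" "a n \<noteq> 0" by (auto simp: supp_def)
      have "M' j \<le> m" using M'M[of j] mj(1) by linarith
      then show "n \<in> ?G" by (rule M'prop[OF n])
    qed
    have GF: "?G \<inter> F j = F j \<inter> supp a"
      using sub GS_sub_supp[of a m] by auto
    have gm: "greedy_sum e m x = Pr ?G x" using greedy_sum_eq[OF x] by (simp add: a_def)
    have "Pr ?G x = Pr (?G \<inter> F j) x + Pr (?G - F j) x" by (rule Pr_split[OF finG])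
    moreover have "Pr (F j) x = Pr (F j \<inter> supp a) x"
      using Pr_supp[OF finF] by (simp add: a_def)
    ultimately have eq1: "x - greedy_sum e m x = z j - Pr (?G - F j) x"
      using gm GF by (simp add: z_def algebra_simps)
    let ?I = "?G \<inter> - F j"
    have finI: "finite ?I" using finG by simp
    have dcI: "dc (cf (z j)) ?I"
      unfolding cfz by (rule dc_restr[OF dc_GS[OF anull]])
    have "Pr ?I (z j) = Pr (?I \<inter> - F j) x"
      by (rule Pr_restr[OF cfz[unfolded a_def] finI])
    then have "Pr (?G - F j) x = Pr ?I (z j)" by (simp add: Diff_eq Int_assoc)
    also have "\<dots> = greedy_sum e (card ?I) (z j)" by (rule greedy_dc[OF zE dcI])
    finally have eq2: "Pr (?G - F j) x = greedy_sum e (card ?I) (z j)" .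
    have "card ?I \<le> card ?G" by (rule card_mono[OF finG]) auto
    also have "\<dots> \<le> m" by (rule card_GS[OF anull])
    finally have cI: "card ?I \<le> M (Suc j)" using mj by simp
    have "labs (greedy_sum e m x - x) = labs (x - greedy_sum e m x)" by (rule labs_minus_commute)
    also have "\<dots> = labs (z j - greedy_sum e (card ?I) (z j))" using eq1 eq2 by simp
    also have "\<dots> \<le> labs (z j) + labs (greedy_sum e (card ?I) (z j))" by (rule labs_triangle_diff)
    also have "\<dots> \<le> w j" unfolding w_def
      by (intro add_left_mono Phi_ge cI M1)
    finally show ?thesis .
  qed
  define v where "v j = (2::real)^j *\<^sub>R w j" for j
  have vpos: "0 \<le> v j" for j unfolding v_def by (intro scaleR_nonneg_nonneg wpos) simp
  have sv: "summable v"
  proof (rule summable_comparison_test'[where g="\<lambda>j. (1 + C) * (1/2::real)^j" and N=0])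
    show "summable (\<lambda>j. (1 + C) * (1/2::real)^j)"
      by (intro summable_mult summable_geometric) simp
    fix j :: nat
    have "norm (v j) = 2^j * norm (w j)" by (simp add: v_def)
    also have "\<dots> \<le> 2^j * ((1 + C) * (1/4)^j)" by (intro mult_left_mono wn) simp
    also have "\<dots> = (1 + C) * (1/2::real)^j"
    proof -
      have "(2::real)^j * (1/4)^j = (1/2)^j" by (simp add: power_mult_distrib[symmetric])
      then show ?thesis by (simp add: algebra_simps)
    qed
    finally show "norm (v j) \<le> (1 + C) * (1/2::real)^j" .
  qed
  define u where "u = suminf v"
  have vle: "v j \<le> u" for j unfolding u_def by (rule suminf_ge_term[OF sv vpos])
  have u0: "0 \<le> u" using vpos[of 0] vle[of 0] by (rule order_trans)
  have wle: "w j \<le> (1/2::real)^j *\<^sub>R u" for j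
  proof -
    have "w j = (1/2::real)^j *\<^sub>R v j" by (simp add: v_def power_mult_distrib[symmetric])
    also have "\<dots> \<le> (1/2::real)^j *\<^sub>R u" by (intro scaleR_left_mono vle) simp
    finally show ?thesis .
  qed
  show ?thesis unfolding u_conv_def
  proof (intro exI[of _ u] exI[of _ "\<lambda>k. (1/2::real)^k"] conjI allI)
    show "0 \<le> u" by (rule u0)
    show "antimono (\<lambda>k. (1/2::real)^k)"
      by (rule antimonoI) (simp add: power_decreasing)
    show "(\<lambda>k. (1/2::real)^k) \<longlonglongrightarrow> 0" by (rule LIMSEQ_power_zero) simp
    fix k
    show "\<exists>nk. \<forall>n\<ge>nk. labs (greedy_sum e n x - x) \<le> (1/2::real)^k *\<^sub>R u"
    proof (intro exI[of _ "M k"] allI impI)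
      fix n assume "M k \<le> n"
      then obtain j where j: "k \<le> j" "M j \<le> n" "n < M (Suc j)"
        using strict_mono_interval[OF smM] by blast
      have "labs (greedy_sum e n x - x) \<le> w j" by (rule key[OF j(2,3)])
      also have "\<dots> \<le> (1/2::real)^j *\<^sub>R u" by (rule wle)
      also have "\<dots> \<le> (1/2::real)^k *\<^sub>R u"
        by (intro scaleR_right_mono u0 power_decreasing j(1)) auto
      finally show "labs (greedy_sum e n x - x) \<le> (1/2::real)^k *\<^sub>R u" .
    qed
  qed
qed

end


context bseq
begin

lemma Ssum_add: "x \<in> E \<Longrightarrow> y \<in> E \<Longrightarrow> Ssum N (x + y) = Ssum N x + Ssum N y"
  using add_E[of x y] by (simp add: Ssum_def scaleR_add_left sum.distrib)

lemma Ssum_diff: "x \<in> E \<Longrightarrow> y \<in> E \<Longrightarrow> Ssum N (x - y) = Ssum N x - Ssum N y"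
  using diff_E[of x y] by (simp add: Ssum_def scaleR_diff_left sum_subtractf)

lemma Ssum_scale: "x \<in> E \<Longrightarrow> Ssum N (c *\<^sub>R x) = c *\<^sub>R Ssum N x"
  using scale_E[of x c] by (simp add: Ssum_def scaleR_sum_right)

lemma Ssum_zero: "Ssum N 0 = 0"
  using zero_E by (simp add: Ssum_def)

lemma Ssum_Suc_diff: "Ssum (Suc n) x - Ssum n x = cf x n *\<^sub>R e n"
  by (simp add: Ssum_def)

lemma complete_Ssum:
  assumes gE: "\<And>J. g J \<in> E" and eta: "\<eta> \<longlonglongrightarrow> 0"
    and cau: "\<And>J J' N. J \<le> J' \<Longrightarrow> norm (Ssum N (g J) - Ssum N (g J')) \<le> \<eta> J"
  shows "\<exists>z\<in>E. \<forall>J N. norm (Ssum N (g J) - Ssum N z) \<le> \<eta> J"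
proof -
  obtain c where c: "c > 0" "\<And>n. c \<le> norm (e n)" using ex_low by blast
  have eta0: "0 \<le> \<eta> J" for J using cau[of J J 0] by simp
  have cfdiff: "\<bar>cf (g J) n - cf (g J') n\<bar> \<le> 2 * \<eta> J / c" if "J \<le> J'" for J J' n
  proof -
    have "(cf (g J) n - cf (g J') n) *\<^sub>R e n
        = (Ssum (Suc n) (g J) - Ssum (Suc n) (g J')) - (Ssum n (g J) - Ssum n (g J'))"
      by (simp add: Ssum_Suc_diff[symmetric] algebra_simps)
    then have "\<bar>cf (g J) n - cf (g J') n\<bar> * norm (e n)
        \<le> norm (Ssum (Suc n) (g J) - Ssum (Suc n) (g J')) + norm (Ssum n (g J) - Ssum n (g J'))"
      by (metis norm_scaleR norm_triangle_ineq4 real_norm_def)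
    also have "\<dots> \<le> 2 * \<eta> J" using cau[OF that, of "Suc n"] cau[OF that, of n] by simp
    finally have h: "\<bar>cf (g J) n - cf (g J') n\<bar> * norm (e n) \<le> 2 * \<eta> J" .
    have "\<bar>cf (g J) n - cf (g J') n\<bar> * c \<le> \<bar>cf (g J) n - cf (g J') n\<bar> * norm (e n)"
      using c(2)[of n] by (intro mult_left_mono) auto
    then have "\<bar>cf (g J) n - cf (g J') n\<bar> * c \<le> 2 * \<eta> J" using h by linarith
    then show ?thesis using c(1) by (simp add: pos_le_divide_eq)
  qed
  have "\<exists>b. (\<lambda>J. cf (g J) n) \<longlonglongrightarrow> b" for n
  proof -
    have "Cauchy (\<lambda>J. cf (g J) n)"
    proof (rule CauchyI)
      fix \<epsilon> :: real assume \<epsilon>: "0 < \<epsilon>"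
      have pos: "0 < \<epsilon> * c / 4" using \<epsilon> c(1) by simp
      have "eventually (\<lambda>J. dist (\<eta> J) 0 < \<epsilon> * c / 4) sequentially"
        using eta[unfolded tendsto_iff] pos by blast
      then obtain M where M: "\<And>J. M \<le> J \<Longrightarrow> \<bar>\<eta> J\<bar> < \<epsilon> * c / 4"
        unfolding eventually_sequentially dist_real_def by auto
      have "norm (cf (g J) n - cf (g J') n) < \<epsilon>" if "M \<le> J" "M \<le> J'" for J J'
      proof (cases "J \<le> J'")
        case True
        have "\<bar>cf (g J) n - cf (g J') n\<bar> \<le> 2 * \<eta> J / c" by (rule cfdiff[OF True])
        also have "\<dots> < \<epsilon>" using M[OF that(1)] c(1) eta0[of J] by (simp add: divide_less_eq)
        finally show ?thesis by simp
      next
        case False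
        have "\<bar>cf (g J') n - cf (g J) n\<bar> \<le> 2 * \<eta> J' / c" by (rule cfdiff) (use False in simp)
        also have "\<dots> < \<epsilon>" using M[OF that(2)] c(1) eta0[of J'] by (simp add: divide_less_eq)
        finally show ?thesis by (simp add: abs_minus_commute)
      qed
      then show "\<exists>M. \<forall>m\<ge>M. \<forall>n'\<ge>M. norm (cf (g m) n - cf (g n') n) < \<epsilon>" by blast
    qed
    then show ?thesis using Cauchy_convergent_iff convergent_def by blast
  qed
  then obtain b where b: "\<And>n. (\<lambda>J. cf (g J) n) \<longlonglongrightarrow> b n" by metis
  define T where "T N = (\<Sum>n<N. b n *\<^sub>R e n)" for N
  have Tlim: "(\<lambda>J. Ssum N (g J)) \<longlonglongrightarrow> T N" for N
    unfolding Ssum_def T_def by (intro tendsto_sum tendsto_scaleR b tendsto_const)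
  have Tb: "norm (Ssum N (g J) - T N) \<le> \<eta> J" for N J
  proof -
    have "(\<lambda>J'. norm (Ssum N (g J) - Ssum N (g J'))) \<longlonglongrightarrow> norm (Ssum N (g J) - T N)"
      by (intro tendsto_norm tendsto_diff tendsto_const Tlim)
    moreover have "\<exists>M. \<forall>J'\<ge>M. norm (Ssum N (g J) - Ssum N (g J')) \<le> \<eta> J"
      using cau by blast
    ultimately show ?thesis by (rule LIMSEQ_le_const2)
  qed
  have "Cauchy T"
  proof (rule CauchyI)
    fix \<epsilon> :: real assume \<epsilon>: "0 < \<epsilon>"
    have pos: "0 < \<epsilon> / 4" using \<epsilon> by simp
    have "eventually (\<lambda>J. dist (\<eta> J) 0 < \<epsilon> / 4) sequentially"
      using eta[unfolded tendsto_iff] pos by blast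
    then obtain J where J: "\<bar>\<eta> J\<bar> < \<epsilon> / 4"
      unfolding eventually_sequentially dist_real_def by auto
    have "convergent (\<lambda>N. Ssum N (g J))" using Ssum_lim[OF gE] convergent_def by blast
    then have "Cauchy (\<lambda>N. Ssum N (g J))" by (simp add: Cauchy_convergent_iff)
    then have "\<exists>M. \<forall>m\<ge>M. \<forall>n\<ge>M. dist (Ssum m (g J)) (Ssum n (g J)) < \<epsilon> / 4"
      unfolding Cauchy_def using pos by blast
    then obtain M where M: "\<And>m n. M \<le> m \<Longrightarrow> M \<le> n \<Longrightarrow> norm (Ssum m (g J) - Ssum n (g J)) < \<epsilon> / 4"
      unfolding dist_norm by blast
    have "norm (T m - T n) < \<epsilon>" if "M \<le> m" "M \<le> n" for m n
    proof -
      let ?A = "T m - Ssum m (g J)" and ?B = "Ssum m (g J) - Ssum n (g J)" and ?C = "Ssum n (g J) - T n"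
      have eq: "T m - T n = ?A + ?B + ?C"
        by simp
      have t1: "norm (?A + ?B + ?C) \<le> norm (?A + ?B) + norm ?C" by (rule norm_triangle_ineq)
      have t2: "norm (?A + ?B) \<le> norm ?A + norm ?B" by (rule norm_triangle_ineq)
      have "norm (T m - T n) \<le> norm ?A + norm ?B + norm ?C"
        unfolding eq using t1 t2 by linarith
      also have "\<dots> < \<epsilon>"
        using Tb[of m J] Tb[of n J] M[OF that] J by (simp add: norm_minus_commute)
      finally show ?thesis .
    qed
    then show "\<exists>M. \<forall>m\<ge>M. \<forall>n\<ge>M. norm (T m - T n) < \<epsilon>" by blast
  qed
  then obtain z where z: "T \<longlonglongrightarrow> z" using Cauchy_convergent_iff convergent_def by blast
  have zE: "z \<in> E" by (rule lim_in_E[OF z]) (simp add: T_def sum_in_E)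
  have "(\<lambda>N. \<Sum>n<N. b n *\<^sub>R e n) \<longlonglongrightarrow> z" using z unfolding T_def .
  then have "cf z = b" by (rule cf_unique[OF zE])
  then have Sz: "Ssum N z = T N" for N by (simp add: Ssum_def T_def)
  have "\<forall>J N. norm (Ssum N (g J) - Ssum N z) \<le> \<eta> J"
    using Tb by (simp add: Sz)
  then show ?thesis using zE by blast
qed

end


context bseq
begin

definition bnd :: "real \<Rightarrow> 'a set" where
  "bnd t = {x \<in> E. \<forall>N. norm (Ssum N x) \<le> t}"

lemma bnd_sub: "bnd t \<subseteq> E"
  by (auto simp: bnd_def)

lemma closure_bnd_sub: "closure (bnd t) \<subseteq> E"
  by (rule closure_minimal[OF bnd_sub closed_E])

lemma E_cover: "x \<in> E \<Longrightarrow> \<exists>k::nat. x \<in> bnd (real k)"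
proof -
  assume x: "x \<in> E"
  have "Bseq (\<lambda>N. Ssum N x)" by (rule convergent_imp_Bseq) (use Ssum_lim[OF x] convergent_def in blast)
  then obtain K where K: "\<And>N. norm (Ssum N x) \<le> K" unfolding Bseq_def by blast
  have "K \<le> real (nat \<lceil>K\<rceil>)" by linarith
  then have "x \<in> bnd (real (nat \<lceil>K\<rceil>))" using K x by (auto simp: bnd_def intro: order_trans)
  then show ?thesis by blast
qed

lemma baire_step: "\<exists>t x0 r. r > 0 \<and> x0 \<in> E \<and> (\<forall>y\<in>E. dist y x0 < r \<longrightarrow> y \<in> closure (bnd t))"
proof (rule ccontr)
  assume H: "\<not> ?thesis"
  let ?X = "top_of_set E"
  let ?G = "range (\<lambda>k::nat. closure (bnd (real k)))"
  have cms: "completely_metrizable_space ?X"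
    by (rule completely_metrizable_space_closedin[OF completely_metrizable_space_euclidean])
       (simp add: closed_closedin[symmetric] closed_E)
  have "?X interior_of \<Union>?G = {}"
  proof (rule Baire_category_alt)
    show "completely_metrizable_space ?X \<or> locally_compact_space ?X \<and> regular_space ?X"
      using cms by blast
    show "countable ?G" by simp
    fix T assume "T \<in> ?G"
    then obtain k :: nat where T: "T = closure (bnd (real k))" by blast
    show "closedin ?X T \<and> ?X interior_of T = {}"
    proof
      show "closedin ?X T"
        unfolding closedin_closed T using closure_bnd_sub by (intro exI[of _ "closure (bnd (real k))"]) auto
      show "?X interior_of T = {}"
      proof (rule ccontr)
        assume "?X interior_of T \<noteq> {}"
        then obtain x U where U: "openin ?X U" "x \<in> U" "U \<subseteq> T"
          unfolding interior_of_def by blast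
        then have xE: "x \<in> E" and "\<exists>r>0. \<forall>x'\<in>E. dist x' x < r \<longrightarrow> x' \<in> U"
          unfolding openin_euclidean_subtopology_iff by blast+
        then obtain r where "r > 0" "\<forall>x'\<in>E. dist x' x < r \<longrightarrow> x' \<in> U" by blast
        then have "r > 0 \<and> x \<in> E \<and> (\<forall>y\<in>E. dist y x < r \<longrightarrow> y \<in> closure (bnd (real k)))"
          using U(3) T xE by blast
        then show False using H by blast
      qed
    qed
  qed
  moreover have "E \<subseteq> \<Union>?G"
  proof
    fix x assume "x \<in> E"
    then obtain k :: nat where "x \<in> bnd (real k)" using E_cover by blast
    then show "x \<in> \<Union>?G" using closure_subset by blast
  qed
  then have "?X interior_of E \<subseteq> ?X interior_of \<Union>?G" by (rule interior_of_mono)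
  moreover have "?X interior_of E = E"
    by (metis interior_of_topspace topspace_euclidean_subtopology)
  ultimately have "E = {}" by blast
  then show False using zero_E by blast
qed

lemma closure_half:
  assumes p: "p \<in> closure (bnd t)" and q: "q \<in> closure (bnd t)"
  shows "(1/2::real) *\<^sub>R (p - q) \<in> closure (bnd t)"
proof -
  obtain P where P: "\<And>n. P n \<in> bnd t" "P \<longlonglongrightarrow> p" using p unfolding closure_sequential by blast
  obtain Q where Q: "\<And>n. Q n \<in> bnd t" "Q \<longlonglongrightarrow> q" using q unfolding closure_sequential by blast
  have "(1/2::real) *\<^sub>R (P n - Q n) \<in> bnd t" for n
  proof -
    have PE: "P n \<in> E" and QE: "Q n \<in> E" using P Q bnd_sub by blast+
    have dE: "P n - Q n \<in> E" using diff_E[OF PE QE] by blast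
    have "(1/2::real) *\<^sub>R (P n - Q n) \<in> E" using scale_E[OF dE] by blast
    moreover have "norm (Ssum N ((1/2::real) *\<^sub>R (P n - Q n))) \<le> t" for N
    proof -
      have "Ssum N ((1/2::real) *\<^sub>R (P n - Q n)) = (1/2::real) *\<^sub>R (Ssum N (P n) - Ssum N (Q n))"
        by (simp add: Ssum_scale[OF dE] Ssum_diff[OF PE QE])
      then have "norm (Ssum N ((1/2::real) *\<^sub>R (P n - Q n))) \<le> (1/2) * (norm (Ssum N (P n)) + norm (Ssum N (Q n)))"
        using norm_triangle_ineq4[of "Ssum N (P n)" "Ssum N (Q n)"] by simp
      also have "\<dots> \<le> (1/2) * (t + t)"
        using P(1)[of n] Q(1)[of n] by (intro mult_left_mono add_mono) (auto simp: bnd_def)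
      finally show ?thesis by simp
    qed
    ultimately show ?thesis by (simp add: bnd_def)
  qed
  moreover have "(\<lambda>n. (1/2::real) *\<^sub>R (P n - Q n)) \<longlonglongrightarrow> (1/2::real) *\<^sub>R (p - q)"
    by (intro tendsto_scaleR tendsto_diff tendsto_const P(2) Q(2))
  ultimately show ?thesis unfolding closure_sequential
    by (intro exI[of _ "\<lambda>n. (1/2::real) *\<^sub>R (P n - Q n)"] conjI allI)
qed

lemma closure_scale:
  assumes y: "y \<in> closure (bnd t)" and s: "0 < s"
  shows "s *\<^sub>R y \<in> closure (bnd (s * t))"
proof -
  obtain P where P: "\<And>n. P n \<in> bnd t" "P \<longlonglongrightarrow> y" using y unfolding closure_sequential by blast
  have "s *\<^sub>R P n \<in> bnd (s * t)" for n
  proof -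
    have PE: "P n \<in> E" using P bnd_sub by blast
    have "s *\<^sub>R P n \<in> E" using scale_E[OF PE] by blast
    moreover have "norm (Ssum N (s *\<^sub>R P n)) \<le> s * t" for N
      using P(1)[of n] s by (auto simp: bnd_def Ssum_scale[OF PE] intro: mult_left_mono)
    ultimately show ?thesis by (simp add: bnd_def)
  qed
  moreover have "(\<lambda>n. s *\<^sub>R P n) \<longlonglongrightarrow> s *\<^sub>R y"
    by (intro tendsto_scaleR tendsto_const P(2))
  ultimately show ?thesis unfolding closure_sequential
    by (intro exI[of _ "\<lambda>n. s *\<^sub>R P n"] conjI allI)
qed

lemma ball_in: "\<exists>t r. r > 0 \<and> (\<forall>y\<in>E. norm y < r \<longrightarrow> y \<in> closure (bnd t))"
proof -
  obtain t x0 r where r: "r > 0" and x0: "x0 \<in> E" and H: "\<forall>y\<in>E. dist y x0 < r \<longrightarrow> y \<in> closure (bnd t)"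
    using baire_step by blast
  have "y \<in> closure (bnd t)" if y: "y \<in> E" "norm y < r" for y
  proof -
    have pE: "x0 + y \<in> E" using add_E[OF x0 y(1)] by blast
    have qE: "x0 - y \<in> E" using diff_E[OF x0 y(1)] by blast
    have p: "x0 + y \<in> closure (bnd t)" using H pE y(2) by (simp add: dist_norm)
    have q: "x0 - y \<in> closure (bnd t)" using H qE y(2) by (simp add: dist_norm)
    have "(1/2::real) *\<^sub>R ((x0 + y) - (x0 - y)) = y" by (simp flip: scaleR_2)
    then show ?thesis using closure_half[OF p q] by simp
  qed
  then show ?thesis using r by blast
qed

lemma banach_basis: "\<exists>K. \<forall>x\<in>E. \<forall>N. norm (Ssum N x) \<le> K * norm x"
proof -
  obtain t r where r: "r > 0" and H: "\<And>y. y \<in> E \<Longrightarrow> norm y < r \<Longrightarrow> y \<in> closure (bnd t)"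
    using ball_in by blast
  have Hs: "y \<in> closure (bnd (s * t))" if y: "y \<in> E" "norm y < s * r" and s: "s > 0" for y s
  proof -
    have y'E: "(1/s) *\<^sub>R y \<in> E" using scale_E[OF y(1)] by blast
    have "norm ((1/s) *\<^sub>R y) < r" using y(2) s by (simp add: divide_less_eq mult.commute)
    then have "(1/s) *\<^sub>R y \<in> closure (bnd t)" by (rule H[OF y'E])
    from closure_scale[OF this s] show ?thesis using s by simp
  qed
  have t0: "0 \<le> t"
  proof -
    have "0 \<in> closure (bnd t)" using H[of 0] zero_E r by simp
    then obtain w where "w \<in> bnd t" unfolding closure_sequential by blast
    then have "norm (Ssum 0 w) \<le> t" by (simp add: bnd_def)
    moreover have "0 \<le> norm (Ssum 0 w)" by (rule norm_ge_zero)
    ultimately show ?thesis by linarith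
  qed
  have main: "norm (Ssum N y) \<le> 2 * t" if yE: "y \<in> E" and yr: "norm y < r" for y N
  proof -
    have step: "\<exists>f. f \<in> bnd (t / 2^j) \<and> norm (\<rho> - f) < r / 2^(Suc j)"
      if "\<rho> \<in> E" "norm \<rho> < r / 2^j" for \<rho> j
    proof -
      have "\<rho> \<in> closure (bnd ((1/2^j) * t))"
        by (rule Hs) (use that in auto)
      moreover have "0 < r / 2^(Suc j)" using r by simp
      ultimately obtain f where "f \<in> bnd ((1/2^j) * t)" "dist f \<rho> < r / 2^(Suc j)"
        unfolding closure_approachable by blast
      then show ?thesis by (auto simp: dist_norm norm_minus_commute)
    qed
    have "\<forall>\<rho>. \<exists>g. \<forall>j. \<rho> \<in> E \<and> norm \<rho> < r / 2^j \<longrightarrow> g j \<in> bnd (t / 2^j) \<and> norm (\<rho> - g j) < r / 2^(Suc j)"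
    proof
      fix \<rho>
      show "\<exists>g. \<forall>j. \<rho> \<in> E \<and> norm \<rho> < r / 2^j \<longrightarrow> g j \<in> bnd (t / 2^j) \<and> norm (\<rho> - g j) < r / 2^(Suc j)"
        by (rule choice) (use step in blast)
    qed
    then obtain pf where pf: "\<And>\<rho> j. \<rho> \<in> E \<Longrightarrow> norm \<rho> < r / 2^j \<Longrightarrow>
        pf \<rho> j \<in> bnd (t / 2^j) \<and> norm (\<rho> - pf \<rho> j) < r / 2^(Suc j)"
      using choice[of "\<lambda>\<rho> g. \<forall>j. \<rho> \<in> E \<and> norm \<rho> < r / 2^j \<longrightarrow> g j \<in> bnd (t / 2^j) \<and> norm (\<rho> - g j) < r / 2^(Suc j)"]
      by blast
    define res where "res = rec_nat y (\<lambda>j \<rho>. \<rho> - pf \<rho> j)"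
    have res0: "res 0 = y" by (simp add: res_def)
    have resS: "res (Suc j) = res j - pf (res j) j" for j by (simp add: res_def)
    have inv: "res j \<in> E \<and> norm (res j) < r / 2^j" for j
    proof (induction j)
      case 0
      then show ?case using yE yr res0 by simp
    next
      case (Suc j)
      then have h: "pf (res j) j \<in> bnd (t / 2^j)" "norm (res j - pf (res j) j) < r / 2^(Suc j)"
        using pf by blast+
      have "res j - pf (res j) j \<in> E" using diff_E[of "res j" "pf (res j) j"] Suc h(1) bnd_sub by blast
      then show ?case using h(2) by (simp add: resS)
    qed
    have fb: "pf (res j) j \<in> bnd (t / 2^j)" for j using pf inv by blast
    have fE: "pf (res j) j \<in> E" for j using fb bnd_sub by blast
    have resE: "res j \<in> E" for j using inv by blast
    have tele: "norm (Ssum N (res J - res J')) \<le> 2 * t / 2^J - 2 * t / 2^J'" if "J \<le> J'" for J J' N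
      using that
    proof (induction J' rule: dec_induct)
      case base
      then show ?case by (simp add: Ssum_zero)
    next
      case (step J')
      have eq: "res J - res (Suc J') = (res J - res J') + pf (res J') J'" by (simp add: resS)
      have dE: "res J - res J' \<in> E" using diff_E resE by blast
      have "Ssum N (res J - res (Suc J')) = Ssum N (res J - res J') + Ssum N (pf (res J') J')"
        unfolding eq by (rule Ssum_add[OF dE fE])
      then have "norm (Ssum N (res J - res (Suc J'))) \<le> norm (Ssum N (res J - res J')) + norm (Ssum N (pf (res J') J'))"
        by (simp add: norm_triangle_ineq)
      also have "\<dots> \<le> (2 * t / 2^J - 2 * t / 2^J') + t / 2^J'"
        using step.IH fb[of J'] by (intro add_mono) (auto simp: bnd_def)
      also have "\<dots> = 2 * t / 2^J - 2 * t / 2^(Suc J')" by (simp add: field_simps)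
      finally show ?case .
    qed
    define g where "g J = y - res J" for J
    have gE: "g J \<in> E" for J unfolding g_def using diff_E[OF yE resE] by blast
    define \<eta> where "\<eta> J = 2 * t * (1/2)^J" for J :: nat
    have eta: "\<eta> \<longlonglongrightarrow> 0" unfolding \<eta>_def
      by (rule tendsto_mult_right_zero) (rule LIMSEQ_power_zero, simp)
    have cau: "norm (Ssum N (g J) - Ssum N (g J')) \<le> \<eta> J" if "J \<le> J'" for J J' N
    proof -
      have "Ssum N (g J) - Ssum N (g J') = Ssum N (g J - g J')" by (rule Ssum_diff[OF gE gE, symmetric])
      also have "g J - g J' = - (res J - res J')" by (simp add: g_def)
      finally have "norm (Ssum N (g J) - Ssum N (g J')) = norm (Ssum N (- (res J - res J')))" by simp
      also have "\<dots> = norm (Ssum N (res J - res J'))"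
      proof -
        have dE: "res J - res J' \<in> E" using diff_E[OF resE resE] by blast
        have "Ssum N ((-1::real) *\<^sub>R (res J - res J')) = (-1::real) *\<^sub>R Ssum N (res J - res J')"
          by (rule Ssum_scale[OF dE])
        then have "Ssum N (- (res J - res J')) = - Ssum N (res J - res J')" by simp
        then show ?thesis by (simp only: norm_minus_cancel)
      qed
      also have "\<dots> \<le> 2 * t / 2^J - 2 * t / 2^J'" by (rule tele[OF that])
      also have "\<dots> \<le> 2 * t / 2^J" using t0 by simp
      also have "\<dots> = \<eta> J" by (simp add: \<eta>_def power_one_over)
      finally show ?thesis .
    qed
    obtain z where zE: "z \<in> E" and zb: "\<And>J N. norm (Ssum N (g J) - Ssum N z) \<le> \<eta> J"
      using complete_Ssum[OF gE eta cau] by blast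
    have gy: "g \<longlonglongrightarrow> y"
    proof -
      have lim: "(\<lambda>J. r * (1/2::real)^J) \<longlonglongrightarrow> 0"
        by (intro tendsto_mult_right_zero LIMSEQ_power_zero) simp
      have "norm (res J) \<le> r * (1/2::real)^J" for J
      proof -
        have "r / 2^J = r * (1/2::real)^J" by (simp add: power_one_over)
        then show ?thesis using inv[of J] by linarith
      qed
      then have le: "\<forall>J. norm (res J) \<le> r * (1/2::real)^J" by blast
      have "(\<lambda>J. res J) \<longlonglongrightarrow> 0"
        by (rule Lim_null_comparison[OF always_eventually[OF le] lim])
      then have "(\<lambda>J. y - res J) \<longlonglongrightarrow> y - 0" by (intro tendsto_diff tendsto_const)
      moreover have "g = (\<lambda>J. y - res J)" by (rule ext) (simp add: g_def)
      ultimately show ?thesis by simp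
    qed
    have gz: "g \<longlonglongrightarrow> z"
    proof -
      have "norm (g J - z) \<le> \<eta> J" for J
      proof -
        have dE: "g J - z \<in> E" using diff_E[OF gE zE] by blast
        have "(\<lambda>N. norm (Ssum N (g J - z))) \<longlonglongrightarrow> norm (g J - z)"
          by (intro tendsto_norm Ssum_lim[OF dE])
        moreover have "\<forall>N. norm (Ssum N (g J - z)) \<le> \<eta> J"
          using zb Ssum_diff[OF gE zE] by simp
        ultimately show ?thesis by (intro LIMSEQ_le_const2) auto
      qed
      then have "(\<lambda>J. g J - z) \<longlonglongrightarrow> 0"
        by (intro Lim_null_comparison[OF always_eventually eta]) simp
      then show ?thesis by (simp add: LIM_zero_iff)
    qed
    have "z = y" using LIMSEQ_unique[OF gz gy] .
    moreover have "g 0 = 0" by (simp add: g_def res0)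
    ultimately have "norm (Ssum N (0::'a) - Ssum N y) \<le> \<eta> 0" using zb[of N 0] by simp
    then show ?thesis by (simp add: Ssum_zero \<eta>_def)
  qed
  have "norm (Ssum N x) \<le> (4 * t / r) * norm x" if x: "x \<in> E" for x N
  proof (cases "x = 0")
    case True
    then show ?thesis by (simp add: Ssum_zero)
  next
    case False
    then have nx: "norm x > 0" by simp
    define s where "s = r / (2 * norm x)"
    have s: "s > 0" using r nx by (simp add: s_def)
    have yE: "s *\<^sub>R x \<in> E" using scale_E[OF x] by blast
    have "norm (s *\<^sub>R x) = r / 2" using nx s r by (simp add: s_def)
    then have "norm (Ssum N (s *\<^sub>R x)) \<le> 2 * t" using r by (intro main[OF yE]) simp
    then have "s * norm (Ssum N x) \<le> 2 * t" using s by (simp add: Ssum_scale[OF x])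
    then have "norm (Ssum N x) \<le> 2 * t / s" using s by (simp add: field_simps)
    also have "2 * t / s = (4 * t / r) * norm x" using r nx by (simp add: s_def field_simps)
    finally show ?thesis .
  qed
  then show ?thesis by blast
qed

lemma cf_bound: "\<exists>D. \<forall>x\<in>E. \<forall>n. \<bar>cf x n\<bar> \<le> D * norm x"
proof -
  obtain K where K: "\<And>x N. x \<in> E \<Longrightarrow> norm (Ssum N x) \<le> K * norm x" using banach_basis by blast
  obtain c where c: "c > 0" "\<And>n. c \<le> norm (e n)" using ex_low by blast
  have "\<bar>cf x n\<bar> \<le> (2 * K / c) * norm x" if x: "x \<in> E" for x n
  proof -
    have "\<bar>cf x n\<bar> * norm (e n) = norm (Ssum (Suc n) x - Ssum n x)"
      by (simp add: Ssum_Suc_diff)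
    also have "\<dots> \<le> norm (Ssum (Suc n) x) + norm (Ssum n x)" by (rule norm_triangle_ineq4)
    also have "\<dots> \<le> 2 * K * norm x" using K[OF x, of "Suc n"] K[OF x, of n] by simp
    finally have h: "\<bar>cf x n\<bar> * norm (e n) \<le> 2 * K * norm x" .
    have "\<bar>cf x n\<bar> * c \<le> \<bar>cf x n\<bar> * norm (e n)" using c(2)[of n] by (intro mult_left_mono) auto
    then have "\<bar>cf x n\<bar> * c \<le> 2 * K * norm x" using h by linarith
    then show ?thesis using c(1) by (simp add: field_simps)
  qed
  then show ?thesis by blast
qed

end


context bseq
begin

lemma Pr_scale: "x \<in> E \<Longrightarrow> Pr J (s *\<^sub>R x) = s *\<^sub>R Pr J x"
  using scale_E[of x s] by (simp add: Pr_def scaleR_sum_right)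

lemma greedy_scale:
  assumes x: "x \<in> E" and s: "s > 0"
  shows "greedy_sum e n (s *\<^sub>R x) = s *\<^sub>R greedy_sum e n x"
proof -
  have sx: "s *\<^sub>R x \<in> E" and cfs: "cf (s *\<^sub>R x) = (\<lambda>n. s * cf x n)" using scale_E[OF x] by blast+
  have "greedy_sum e n (s *\<^sub>R x) = Pr (GS (cf (s *\<^sub>R x)) n) (s *\<^sub>R x)" by (rule greedy_sum_eq[OF sx])
  also have "GS (cf (s *\<^sub>R x)) n = GS (cf x) n" unfolding cfs using s by (simp add: GS_scale)
  also have "Pr (GS (cf x) n) (s *\<^sub>R x) = s *\<^sub>R Pr (GS (cf x) n) x" by (rule Pr_scale[OF x])
  also have "Pr (GS (cf x) n) x = greedy_sum e n x" by (rule greedy_sum_eq[OF x, symmetric])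
  finally show ?thesis .
qed

lemma Phi_scale_le:
  assumes x: "x \<in> E" and s: "s > 0" and m: "1 \<le> m"
  shows "Phi (s *\<^sub>R x) m \<le> s *\<^sub>R Phi x m"
proof (rule Phi_le[OF m])
  fix n assume n: "1 \<le> n" "n \<le> m"
  have "labs (greedy_sum e n (s *\<^sub>R x)) = s *\<^sub>R labs (greedy_sum e n x)"
    using s by (simp add: greedy_scale[OF x s] labs_scaleR)
  also have "\<dots> \<le> s *\<^sub>R Phi x m" using s Phi_ge[OF n(2) m] by (intro scaleR_left_mono) auto
  finally show "labs (greedy_sum e n (s *\<^sub>R x)) \<le> s *\<^sub>R Phi x m" .
qed

lemma Phi_scale:
  assumes x: "x \<in> E" and s: "s > 0" and m: "1 \<le> m"
  shows "Phi (s *\<^sub>R x) m = s *\<^sub>R Phi x m"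
proof (rule antisym)
  show "Phi (s *\<^sub>R x) m \<le> s *\<^sub>R Phi x m" by (rule Phi_scale_le[OF x s m])
  have sx: "s *\<^sub>R x \<in> E" using scale_E[OF x] by blast
  have "Phi x m = Phi ((1/s) *\<^sub>R (s *\<^sub>R x)) m" using s by simp
  also have "\<dots> \<le> (1/s) *\<^sub>R Phi (s *\<^sub>R x) m" by (rule Phi_scale_le[OF sx _ m]) (use s in simp)
  finally have "s *\<^sub>R Phi x m \<le> s *\<^sub>R ((1/s) *\<^sub>R Phi (s *\<^sub>R x) m)"
    using s by (intro scaleR_left_mono) auto
  then show "s *\<^sub>R Phi x m \<le> Phi (s *\<^sub>R x) m" using s by simp
qed

lemma greedy_zero_vec: "greedy_sum e n 0 = 0"
  using greedy_sum_eq[OF zero_E(1)] by (simp add: zero_E(2) GS_def Pr_def)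

lemma Phi_zero_vec: "1 \<le> m \<Longrightarrow> Phi 0 m = 0"
  by (intro antisym Phi_le Phi_nonneg) (auto simp: greedy_zero_vec)

lemma labs_Pr_le: "labs (Pr A x) \<le> (\<Sum>i\<in>A. \<bar>cf x i\<bar> *\<^sub>R labs (e i))"
  unfolding Pr_def using labs_sum_le[of "\<lambda>i. cf x i *\<^sub>R e i" A] by (simp add: labs_scaleR)

lemma bad_vec:
  assumes notv: "\<not> (\<exists>C\<ge>1. \<forall>x\<in>E. \<forall>m\<ge>1. norm (Phi x m) \<le> C * norm x)" and tau: "\<tau> > 0"
  shows "\<exists>y m N'. y \<in> E \<and> 1 \<le> m \<and> N \<le> N' \<and> supp (cf y) \<subseteq> {N..<N'} \<and> norm y = \<tau> \<and> R \<le> norm (Phi y m)"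
proof -
  obtain K0 where K0: "\<And>x N. x \<in> E \<Longrightarrow> norm (Ssum N x) \<le> K0 * norm x" using banach_basis by blast
  define K where "K = max K0 0"
  have K: "norm (Ssum N x) \<le> K * norm x" if "x \<in> E" for x N
    using K0[OF that, of N] by (simp add: K_def) (meson max.cobounded1 mult_right_mono norm_ge_zero order_trans)
  have K0': "0 \<le> K" by (simp add: K_def)
  obtain D0 where D0: "\<And>x n. x \<in> E \<Longrightarrow> \<bar>cf x n\<bar> \<le> D0 * norm x" using cf_bound by blast
  define D where "D = max D0 0"
  have D: "\<bar>cf x n\<bar> \<le> D * norm x" if "x \<in> E" for x n
    using D0[OF that, of n] by (simp add: D_def) (meson max.cobounded1 mult_right_mono norm_ge_zero order_trans)
  have D0': "0 \<le> D" by (simp add: D_def)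
  obtain Cup where Cup: "Cup > 0" "\<And>n. norm (e n) \<le> Cup" using ex_up by blast
  define R' where "R' = max R 0 / \<tau>"
  have R'0: "0 \<le> R'" using tau by (simp add: R'_def)
  define C where "C = 2 * K * R' + real N * D * Cup + 1"
  have C1: "1 \<le> C" using K0' R'0 D0' Cup by (simp add: C_def)
  obtain x m where x: "x \<in> E" and m: "1 \<le> m" and big: "C * norm x < norm (Phi x m)"
    using notv C1 by (meson not_le)
  define a where "a = cf x"
  have anull: "a \<longlonglongrightarrow> 0" using cf_null[OF x] by (simp add: a_def)
  obtain N1 where N1: "GS a m \<subseteq> {..<N1}" using finite_nat_bounded[OF finite_GS[OF anull]] by blast
  define N' where "N' = max N N1"
  define S where "S = {N..<N'}"
  define y0 where "y0 = Pr S x"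
  have y0E: "y0 \<in> E" by (simp add: y0_def Pr_in_E)
  have cfy0: "cf y0 = restr S a" by (simp add: y0_def cf_Pr S_def restr_def a_def)
  have suppy0: "supp (cf y0) \<subseteq> S" by (auto simp: cfy0 supp_def restr_def split: if_splits)
  define W where "W = (\<Sum>i<N. \<bar>a i\<bar> *\<^sub>R labs (e i))"
  have key: "Phi x m \<le> Phi y0 m + W"
  proof (rule Phi_le[OF m])
    fix n assume n: "1 \<le> n" "n \<le> m"
    have finG: "finite (GS a n)" by (rule finite_GS[OF anull])
    have Gsub: "GS a n \<subseteq> {..<N'}" using GS_mono[OF n(2), of a] N1 by (auto simp: N'_def)
    have "greedy_sum e n x = Pr (GS a n) x" using greedy_sum_eq[OF x] by (simp add: a_def)
    also have "\<dots> = Pr (GS a n \<inter> S) x + Pr (GS a n - S) x" by (rule Pr_split[OF finG])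
    finally have split: "greedy_sum e n x = Pr (GS a n \<inter> S) x + Pr (GS a n - S) x" .
    have fin2: "finite (GS a n \<inter> S)" using finG by simp
    have "Pr (GS a n \<inter> S) y0 = Pr (GS a n \<inter> S \<inter> S) x"
      by (rule Pr_restr[OF _ fin2]) (simp add: cfy0 a_def)
    then have e1: "Pr (GS a n \<inter> S) x = Pr (GS a n \<inter> S) y0" by (simp add: Int_assoc)
    have dc1: "dc (cf y0) (GS a n \<inter> S)" unfolding cfy0 by (rule dc_restr[OF dc_GS[OF anull]])
    have e2: "Pr (GS a n \<inter> S) y0 = greedy_sum e (card (GS a n \<inter> S)) y0" by (rule greedy_dc[OF y0E dc1])
    have "card (GS a n \<inter> S) \<le> card (GS a n)" by (rule card_mono[OF finG]) auto
    also have "\<dots> \<le> n" by (rule card_GS[OF anull])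
    finally have c1: "card (GS a n \<inter> S) \<le> m" using n(2) by simp
    have l1: "labs (Pr (GS a n \<inter> S) x) \<le> Phi y0 m"
      unfolding e1 e2 by (rule Phi_ge[OF c1 m])
    have sub2: "GS a n - S \<subseteq> {..<N}" using Gsub by (auto simp: S_def)
    have "labs (Pr (GS a n - S) x) \<le> (\<Sum>i\<in>GS a n - S. \<bar>cf x i\<bar> *\<^sub>R labs (e i))" by (rule labs_Pr_le)
    also have "\<dots> \<le> W" unfolding W_def a_def
      by (rule sum_mono2[OF _ sub2[unfolded a_def]]) (auto intro: scaleR_nonneg_nonneg labs_nonneg)
    finally have l2: "labs (Pr (GS a n - S) x) \<le> W" .
    have "labs (greedy_sum e n x) \<le> labs (Pr (GS a n \<inter> S) x) + labs (Pr (GS a n - S) x)"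
      unfolding split by (rule labs_triangle)
    also have "\<dots> \<le> Phi y0 m + W" by (rule add_mono[OF l1 l2])
    finally show "labs (greedy_sum e n x) \<le> Phi y0 m + W" .
  qed
  have W0: "0 \<le> W" unfolding W_def by (intro sum_nonneg scaleR_nonneg_nonneg labs_nonneg) auto
  have "norm (Phi x m) \<le> norm (Phi y0 m + W)" by (rule norm_mono_nonneg[OF Phi_nonneg[OF m] key])
  also have "\<dots> \<le> norm (Phi y0 m) + norm W" by (rule norm_triangle_ineq)
  finally have nPhi: "norm (Phi x m) \<le> norm (Phi y0 m) + norm W" .
  have "norm W \<le> (\<Sum>i<N. norm (\<bar>a i\<bar> *\<^sub>R labs (e i)))" unfolding W_def by (rule norm_sum)
  also have "\<dots> \<le> (\<Sum>i<N. D * norm x * Cup)"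
  proof (rule sum_mono)
    fix i assume "i \<in> {..<N}"
    have "norm (\<bar>a i\<bar> *\<^sub>R labs (e i)) = \<bar>a i\<bar> * norm (e i)" by (simp add: norm_labs)
    also have "\<dots> \<le> (D * norm x) * Cup"
      using D[OF x, of i] Cup(2)[of i] by (intro mult_mono) (auto simp: a_def)
    finally show "norm (\<bar>a i\<bar> *\<^sub>R labs (e i)) \<le> D * norm x * Cup" .
  qed
  also have "\<dots> = real N * D * Cup * norm x" by simp
  finally have nW: "norm W \<le> real N * D * Cup * norm x" .
  have NN': "N \<le> N'" by (simp add: N'_def)
  have "y0 = Ssum N' x - Ssum N x"
  proof -
    have "Pr {..<N'} x = Pr ({..<N'} \<inter> {..<N}) x + Pr ({..<N'} - {..<N}) x" by (rule Pr_split) simp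
    moreover have "{..<N'} \<inter> {..<N} = {..<N}" "{..<N'} - {..<N} = S" using NN' by (auto simp: S_def)
    ultimately show ?thesis by (simp add: y0_def Ssum_Pr)
  qed
  then have ny0: "norm y0 \<le> 2 * K * norm x"
    using norm_triangle_ineq4[of "Ssum N' x" "Ssum N x"] K[OF x, of N'] K[OF x, of N] by simp
  have nx: "norm x > 0"
  proof (rule ccontr)
    assume "\<not> norm x > 0"
    then have "x = 0" by simp
    then show False using big Phi_zero_vec[OF m] by simp
  qed
  have "(2 * K * R' + 1) * norm x < norm (Phi y0 m)"
    using big nPhi nW by (simp add: C_def algebra_simps)
  then have bigy0: "R' * norm y0 < norm (Phi y0 m)" and pos: "0 < norm (Phi y0 m)"
  proof -
    assume h: "(2 * K * R' + 1) * norm x < norm (Phi y0 m)"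
    have "R' * norm y0 \<le> R' * (2 * K * norm x)" using ny0 R'0 by (rule mult_left_mono)
    also have "\<dots> < (2 * K * R' + 1) * norm x" using nx by (simp add: algebra_simps)
    finally show "R' * norm y0 < norm (Phi y0 m)" using h by linarith
    show "0 < norm (Phi y0 m)" using h nx K0' R'0 by (smt (verit) mult_nonneg_nonneg)
  qed
  have y0nz: "y0 \<noteq> 0" using pos Phi_zero_vec[OF m] by auto
  define s where "s = \<tau> / norm y0"
  have s: "s > 0" using tau y0nz by (simp add: s_def)
  define y where "y = s *\<^sub>R y0"
  have yE: "y \<in> E" unfolding y_def using scale_E[OF y0E] by blast
  have cfy: "cf y = (\<lambda>n. s * cf y0 n)" unfolding y_def using scale_E[OF y0E] by blast
  have "supp (cf y) = supp (cf y0)" using s by (simp add: cfy supp_def)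
  then have suppy: "supp (cf y) \<subseteq> {N..<N'}" using suppy0 by (simp add: S_def)
  have ny: "norm y = \<tau>" using tau y0nz by (simp add: y_def s_def)
  have "norm (Phi y m) = s * norm (Phi y0 m)" using s by (simp add: y_def Phi_scale[OF y0E s m])
  also have "\<dots> \<ge> s * (R' * norm y0)" using bigy0 s by simp
  finally have "s * (R' * norm y0) \<le> norm (Phi y m)" .
  moreover have "s * (R' * norm y0) = max R 0" using y0nz tau by (simp add: s_def R'_def)
  ultimately have "R \<le> norm (Phi y m)" by simp
  then show ?thesis using yE m NN' suppy ny by blast
qed

end


context bseq
begin

lemma psum_E:
  fixes f :: "nat \<Rightarrow> 'a" and J :: nat
  assumes "\<And>n. f n \<in> E"
  shows "(\<Sum>n<J. f n) \<in> E \<and> cf (\<Sum>n<J. f n) = (\<lambda>i. \<Sum>n<J. cf (f n) i)"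
proof (induction J)
  case 0
  then show ?case using zero_E by simp
next
  case (Suc J)
  then have h: "(\<Sum>n<J. f n) \<in> E" "cf (\<Sum>n<J. f n) = (\<lambda>i. \<Sum>n<J. cf (f n) i)" by blast+
  have "(\<Sum>n<Suc J. f n) = (\<Sum>n<J. f n) + f J" by simp
  then show ?case using add_E[OF h(1) assms[of J]] h(2) by simp
qed

lemma iv_imp_v:
  assumes iv: "\<forall>x\<in>E. \<exists>B. \<forall>m\<ge>1. norm (Phi x m) \<le> B"
  shows "\<exists>C\<ge>1. \<forall>x\<in>E. \<forall>m\<ge>1. norm (Phi x m) \<le> C * norm x"
proof (rule ccontr)
  assume notv: "\<not> ?thesis"
  obtain D0 where D0: "\<And>x n. x \<in> E \<Longrightarrow> \<bar>cf x n\<bar> \<le> D0 * norm x" using cf_bound by blast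
  define D where "D = max D0 0"
  have D: "\<bar>cf x n\<bar> \<le> D * norm x" if "x \<in> E" for x n
    using D0[OF that, of n] by (simp add: D_def) (meson max.cobounded1 mult_right_mono norm_ge_zero order_trans)
  have Dpos: "0 \<le> D" by (simp add: D_def)
  define P where "P n st \<longleftrightarrow> fst st \<in> E \<and> supp (cf (fst st)) \<subseteq> {..<fst (snd st)}
      \<and> norm (fst st) \<le> (1/2::real)^n \<and> 0 < snd (snd st) \<and> (\<forall>i. \<bar>cf (fst st) i\<bar> \<le> snd (snd st))
      \<and> (\<exists>m\<ge>1. real n \<le> norm (Phi (fst st) m))" for n and st :: "'a \<times> nat \<times> real"
  define Q where "Q n st st' \<longleftrightarrow> fst (snd st) \<le> fst (snd st') \<and> supp (cf (fst st')) \<subseteq> {fst (snd st)..<fst (snd st')}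
      \<and> snd (snd st') \<le> snd (snd st) \<and> (\<forall>k. cf (fst st) k \<noteq> 0 \<longrightarrow> snd (snd st') < \<bar>cf (fst st) k\<bar>)"
    for n :: nat and st st' :: "'a \<times> nat \<times> real"
  have P0: "\<exists>st. P 0 st"
  proof (intro exI[of _ "(0, 0, 1)"])
    have "1 \<le> (1::nat)" by simp
    moreover have "real 0 \<le> norm (Phi 0 1)" by simp
    ultimately have "\<exists>m\<ge>1. real 0 \<le> norm (Phi 0 m)" by blast
    then show "P 0 (0, 0, 1)" unfolding P_def using zero_E by (simp add: supp_def)
  qed
  have PS: "\<exists>st'. P (Suc n) st' \<and> Q n st st'" if Pst: "P n st" for n st
  proof -
    obtain b L \<beta> where st: "st = (b, L, \<beta>)" by (cases st) auto
    have bE: "b \<in> E" and bsupp: "supp (cf b) \<subseteq> {..<L}" and \<beta>pos: "0 < \<beta>"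
      using Pst by (auto simp: P_def st)
    have finS: "finite (supp (cf b))" using bsupp finite_subset by blast
    define \<mu> where "\<mu> = Min (insert \<beta> ((\<lambda>k. \<bar>cf b k\<bar>) ` supp (cf b)))"
    have \<mu>pos: "0 < \<mu>" unfolding \<mu>_def using finS \<beta>pos by (auto simp: supp_def)
    have \<mu>\<beta>: "\<mu> \<le> \<beta>" unfolding \<mu>_def using finS by simp
    have \<mu>k: "\<mu> \<le> \<bar>cf b k\<bar>" if "cf b k \<noteq> 0" for k
      unfolding \<mu>_def using finS that by (intro Min_le) (auto simp: supp_def)
    define \<beta>' where "\<beta>' = \<mu> / 2"
    define \<tau> where "\<tau> = min ((1/2::real)^(Suc n)) (\<beta>' / (D + 1))"
    have \<tau>pos: "0 < \<tau>" using \<mu>pos Dpos by (simp add: \<tau>_def \<beta>'_def)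
    obtain y m N' where y: "y \<in> E" "1 \<le> m" "L \<le> N'" "supp (cf y) \<subseteq> {L..<N'}" "norm y = \<tau>"
        "real (Suc n) \<le> norm (Phi y m)"
      using bad_vec[OF notv \<tau>pos, of L "real (Suc n)"] by blast
    have cfy: "\<bar>cf y i\<bar> \<le> \<beta>'" for i
    proof -
      have "\<bar>cf y i\<bar> \<le> D * \<tau>" using D[OF y(1), of i] y(5) by simp
      also have "\<dots> \<le> D * (\<beta>' / (D + 1))" using Dpos by (intro mult_left_mono) (auto simp: \<tau>_def)
      also have "\<dots> \<le> \<beta>'"
      proof -
        have "0 \<le> \<beta>'" using \<mu>pos by (simp add: \<beta>'_def)
        then have "D * \<beta>' \<le> (D + 1) * \<beta>'" by (simp add: algebra_simps)
        then show ?thesis using Dpos by (simp add: divide_le_eq mult.commute)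
      qed
      finally show ?thesis .
    qed
    have yle: "norm y \<le> (1/2::real)^(Suc n)" using y(5) unfolding \<tau>_def by linarith
    have Pn: "P (Suc n) (y, N', \<beta>')"
      unfolding P_def using y cfy \<mu>pos yle by (auto simp: \<beta>'_def)
    have sepk: "\<beta>' < \<bar>cf b k\<bar>" if "cf b k \<noteq> 0" for k
      using \<mu>k[OF that] \<mu>pos unfolding \<beta>'_def by linarith
    have Qn: "Q n st (y, N', \<beta>')"
      unfolding Q_def st using y \<mu>\<beta> sepk \<mu>pos by (auto simp: \<beta>'_def)
    show ?thesis using Pn Qn by blast
  qed
  obtain f where f: "\<And>n. P n (f n)" "\<And>n. Q n (f n) (f (Suc n))"
    using dependent_nat_choice[of P Q, OF P0 PS] by blast
  define bb where "bb n = fst (f n)" for n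
  define LL where "LL n = fst (snd (f n))" for n
  define \<beta> where "\<beta> n = snd (snd (f n))" for n
  have bbE: "bb n \<in> E" and bbsupp: "supp (cf (bb n)) \<subseteq> {..<LL n}" and bbn: "norm (bb n) \<le> (1/2::real)^n"
    and bb\<beta>: "\<bar>cf (bb n) i\<bar> \<le> \<beta> n" and bbbad: "\<exists>m\<ge>1. real n \<le> norm (Phi (bb n) m)" for n i
    using f(1)[of n] unfolding P_def bb_def LL_def \<beta>_def by blast+
  have LLS: "LL n \<le> LL (Suc n)" and suppS: "supp (cf (bb (Suc n))) \<subseteq> {LL n..<LL (Suc n)}"
    and \<beta>S: "\<beta> (Suc n) \<le> \<beta> n" and \<beta>sep: "cf (bb n) k \<noteq> 0 \<Longrightarrow> \<beta> (Suc n) < \<bar>cf (bb n) k\<bar>" for n k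
    using f(2)[of n] unfolding Q_def bb_def LL_def \<beta>_def by blast+
  have LLmono: "p \<le> q \<Longrightarrow> LL p \<le> LL q" for p q by (rule lift_Suc_mono_le[of LL, OF LLS])
  have \<beta>mono: "p \<le> q \<Longrightarrow> \<beta> q \<le> \<beta> p" for p q by (rule lift_Suc_antimono_le[of \<beta>, OF \<beta>S])
  have loc1: "i < LL p" if "cf (bb p) i \<noteq> 0" for p i
  proof -
    have "i \<in> supp (cf (bb p))" using that by (simp add: supp_def)
    then show ?thesis using bbsupp[of p] by blast
  qed
  have loc2: "LL p \<le> i" if "cf (bb (Suc p)) i \<noteq> 0" for p i
  proof -
    have "i \<in> supp (cf (bb (Suc p)))" using that by (simp add: supp_def)
    then show ?thesis using suppS[of p] by auto
  qed
  have disj: "cf (bb q) i = 0" if pq: "p < q" and nz: "cf (bb p) i \<noteq> 0" for p q i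
  proof (rule ccontr)
    assume h: "cf (bb q) i \<noteq> 0"
    obtain q' where q': "q = Suc q'" using pq by (cases q) auto
    have "LL q' \<le> i" using loc2[of q' i] h q' by simp
    moreover have "i < LL p" by (rule loc1[OF nz])
    moreover have "LL p \<le> LL q'" using pq q' by (intro LLmono) simp
    ultimately show False by simp
  qed
  have sep: "\<bar>cf (bb q) i\<bar> < \<bar>cf (bb p) k\<bar>" if "p < q" "cf (bb p) k \<noteq> 0" for p q i k
  proof -
    have "\<bar>cf (bb q) i\<bar> \<le> \<beta> q" by (rule bb\<beta>)
    also have "\<dots> \<le> \<beta> (Suc p)" using that(1) by (intro \<beta>mono) simp
    also have "\<dots> < \<bar>cf (bb p) k\<bar>" by (rule \<beta>sep[OF that(2)])
    finally show ?thesis .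
  qed
  have sn: "summable (\<lambda>n. norm (bb n))"
    by (rule summable_comparison_test[OF _ summable_geometric[of "1/2::real"]]) (use bbn in auto)
  have sb: "summable bb" by (rule summable_norm_cancel[OF sn])
  define x where "x = suminf bb"
  have ps: "(\<lambda>J. \<Sum>n<J. bb n) \<longlonglongrightarrow> x" unfolding x_def by (rule summable_LIMSEQ[OF sb])
  have psE: "(\<Sum>n<J. bb n) \<in> E" and pscf: "cf (\<Sum>n<J. bb n) = (\<lambda>i. \<Sum>n<J. cf (bb n) i)" for J
    using psum_E[of bb J] bbE by blast+
  have xE: "x \<in> E" by (rule lim_in_E[OF ps psE])
  have cflim: "(\<lambda>J. \<Sum>n<J. cf (bb n) i) \<longlonglongrightarrow> cf x i" for i
  proof -
    have le: "\<forall>J. norm (cf x i - (\<Sum>n<J. cf (bb n) i)) \<le> D * norm (x - (\<Sum>n<J. bb n))"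
    proof
      fix J
      have dE: "x - (\<Sum>n<J. bb n) \<in> E" "cf (x - (\<Sum>n<J. bb n)) = (\<lambda>i. cf x i - cf (\<Sum>n<J. bb n) i)"
        using diff_E[OF xE psE[of J]] by blast+
      have "cf (x - (\<Sum>n<J. bb n)) i = cf x i - (\<Sum>n<J. cf (bb n) i)"
        using dE(2) pscf[of J] by simp
      then show "norm (cf x i - (\<Sum>n<J. cf (bb n) i)) \<le> D * norm (x - (\<Sum>n<J. bb n))"
        using D[OF dE(1), of i] by simp
    qed
    have lim: "(\<lambda>J. D * norm (x - (\<Sum>n<J. bb n))) \<longlonglongrightarrow> 0"
    proof -
      have "(\<lambda>J. x - (\<Sum>n<J. bb n)) \<longlonglongrightarrow> x - x" by (intro tendsto_diff tendsto_const ps)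
      then have "(\<lambda>J. norm (x - (\<Sum>n<J. bb n))) \<longlonglongrightarrow> norm (x - x)" by (rule tendsto_norm)
      then have "(\<lambda>J. norm (x - (\<Sum>n<J. bb n))) \<longlonglongrightarrow> 0" by simp
      then show ?thesis by (rule tendsto_mult_right_zero)
    qed
    have "(\<lambda>J. cf x i - (\<Sum>n<J. cf (bb n) i)) \<longlonglongrightarrow> 0"
      by (rule Lim_null_comparison[OF always_eventually[OF le] lim])
    then have "(\<lambda>J. cf x i - (cf x i - (\<Sum>n<J. cf (bb n) i))) \<longlonglongrightarrow> cf x i - 0"
      by (intro tendsto_diff tendsto_const)
    then show ?thesis by simp
  qed
  have H1: "cf x i = cf (bb p) i" if nz: "cf (bb p) i \<noteq> 0" for p i
  proof -
    have "eventually (\<lambda>J. (\<Sum>n<J. cf (bb n) i) = cf (bb p) i) sequentially"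
      using eventually_ge_at_top[of "Suc p"]
    proof (rule eventually_mono)
      fix J assume J: "Suc p \<le> J"
      have "(\<Sum>n<J. cf (bb n) i) = cf (bb p) i + (\<Sum>n\<in>{..<J} - {p}. cf (bb n) i)"
        by (rule sum.remove) (use J in auto)
      also have "(\<Sum>n\<in>{..<J} - {p}. cf (bb n) i) = 0"
      proof (rule sum.neutral, intro ballI)
        fix n assume "n \<in> {..<J} - {p}"
        then have "n \<noteq> p" by simp
        then show "cf (bb n) i = 0"
          using disj[of p n i] disj[of n p i] nz by (cases n p rule: linorder_cases) auto
      qed
      finally show "(\<Sum>n<J. cf (bb n) i) = cf (bb p) i" by simp
    qed
    then have "(\<lambda>J. \<Sum>n<J. cf (bb n) i) \<longlonglongrightarrow> cf (bb p) i" by (rule tendsto_eventually)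
    then show ?thesis using LIMSEQ_unique[OF cflim] by blast
  qed
  have H2: "\<exists>p. cf (bb p) i \<noteq> 0" if nz: "cf x i \<noteq> 0" for i
  proof (rule ccontr)
    assume "\<not> ?thesis"
    then have "(\<lambda>J. \<Sum>n<J. cf (bb n) i) = (\<lambda>J. 0)" by auto
    then have "cf x i = 0" using cflim[of i] LIMSEQ_unique[OF _ tendsto_const] by metis
    then show False using nz by simp
  qed
  define a where "a = cf x"
  have anull: "a \<longlonglongrightarrow> 0" using cf_null[OF xE] by (simp add: a_def)
  obtain B where B: "\<And>m. 1 \<le> m \<Longrightarrow> norm (Phi x m) \<le> B" using iv xE by blast
  obtain n where n: "2 * B < real n" using reals_Archimedean2 by blast
  define q where "q = Suc n"
  obtain m where m: "1 \<le> m" "real q \<le> norm (Phi (bb q) m)" using bbbad[of q] by blast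
  define J0 where "J0 = supp a \<inter> {..<LL n}"
  have finJ0: "finite J0" by (simp add: J0_def)
  have prec_block: "p \<le> p'" if pr: "prec a i k" and ip: "cf (bb p) i \<noteq> 0" and kp: "cf (bb p') k \<noteq> 0" for i k p p'
  proof (rule ccontr)
    assume "\<not> p \<le> p'"
    then have "p' < p" by simp
    from sep[OF this kp, of i] have "\<bar>cf (bb p) i\<bar> < \<bar>cf (bb p') k\<bar>" .
    moreover have "\<bar>a k\<bar> \<le> \<bar>a i\<bar>" by (rule prec_ge[OF pr])
    ultimately show False using H1[OF ip] H1[OF kp] by (simp add: a_def)
  qed
  have dcJ0: "dc a J0"
    unfolding dc_def
  proof (intro conjI ballI allI impI)
    show "finite J0" by (rule finJ0)
    show "J0 \<subseteq> supp a" by (simp add: J0_def)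
    fix k i assume k: "k \<in> J0" and pr: "prec a i k"
    have ak: "a k \<noteq> 0" using k by (simp add: J0_def supp_def)
    have ai: "a i \<noteq> 0" by (rule prec_supp[OF pr ak])
    obtain p where ip: "cf (bb p) i \<noteq> 0" using H2 ai by (auto simp: a_def)
    obtain p' where kp: "cf (bb p') k \<noteq> 0" using H2 ak by (auto simp: a_def)
    have "p' \<le> n"
    proof (rule ccontr)
      assume "\<not> p' \<le> n"
      then obtain p'' where p'': "p' = Suc p''" "n \<le> p''" by (cases p') auto
      have "LL p'' \<le> k" using loc2[of p'' k] kp p'' by simp
      moreover have "LL n \<le> LL p''" by (rule LLmono[OF p''(2)])
      moreover have "k < LL n" using k by (simp add: J0_def)
      ultimately show False by simp
    qed
    moreover have "p \<le> p'" by (rule prec_block[OF pr ip kp])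
    ultimately have "LL p \<le> LL n" by (intro LLmono) simp
    then have "i < LL n" using loc1[OF ip] by simp
    then show "i \<in> J0" using ai by (simp add: J0_def supp_def)
  qed
  have bound: "labs (greedy_sum e r (bb q)) \<le> Phi x (LL q + 1) + Phi x (LL q + 1)" if r: "1 \<le> r" "r \<le> m" for r
  proof -
    define I where "I = GS (cf (bb q)) r"
    have bqnull: "cf (bb q) \<longlonglongrightarrow> 0" by (rule cf_null[OF bbE])
    have finI: "finite I" unfolding I_def by (rule finite_GS[OF bqnull])
    have dcI: "dc (cf (bb q)) I" unfolding I_def by (rule dc_GS[OF bqnull])
    have Isupp: "I \<subseteq> supp (cf (bb q))" unfolding I_def by (rule GS_sub_supp)
    have Iloc: "I \<subseteq> {LL n..<LL q}" using Isupp suppS[of n] by (simp add: q_def)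
    have aI: "a i = cf (bb q) i" if "i \<in> I" for i
      using H1[of q i] Isupp that by (auto simp: a_def supp_def)
    define J where "J = J0 \<union> I"
    have finJ: "finite J" using finJ0 finI by (simp add: J_def)
    have dcJ: "dc a J"
      unfolding dc_def
    proof (intro conjI ballI allI impI)
      show "finite J" by (rule finJ)
      show "J \<subseteq> supp a" using Isupp aI by (auto simp: J_def J0_def supp_def)
      fix k i assume k: "k \<in> J" and pr: "prec a i k"
      show "i \<in> J"
      proof (cases "k \<in> J0")
        case True
        then show ?thesis using dcJ0 pr by (auto simp: dc_def J_def)
      next
        case False
        then have kI: "k \<in> I" using k by (simp add: J_def)
        have kq: "cf (bb q) k \<noteq> 0" using Isupp kI by (auto simp: supp_def)
        have ak: "a k \<noteq> 0" using aI[OF kI] kq by simp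
        have ai: "a i \<noteq> 0" by (rule prec_supp[OF pr ak])
        obtain p where ip: "cf (bb p) i \<noteq> 0" using H2 ai by (auto simp: a_def)
        have pq: "p \<le> q" by (rule prec_block[OF pr ip kq])
        show ?thesis
        proof (cases "p = q")
          case True
          have "prec (cf (bb q)) i k"
            using pr H1[OF ip] H1[OF kq] True by (simp add: a_def prec_def)
          then have "i \<in> I" using dcI kI by (auto simp: dc_def)
          then show ?thesis by (simp add: J_def)
        next
          case False
          then have "p \<le> n" using pq by (simp add: q_def)
          then have "LL p \<le> LL n" by (rule LLmono)
          then have "i < LL n" using loc1[OF ip] by simp
          then show ?thesis using ai by (simp add: J_def J0_def supp_def)
        qed
      qed
    qed
    have disjJI: "J0 \<inter> I = {}" using Iloc by (auto simp: J0_def)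
    have "Pr J x = Pr J0 x + Pr I x"
      unfolding J_def Pr_def by (rule sum.union_disjoint[OF finJ0 finI disjJI])
    moreover have "Pr J x = greedy_sum e (card J) x" using greedy_dc[OF xE] dcJ by (simp add: a_def)
    moreover have "Pr J0 x = greedy_sum e (card J0) x" using greedy_dc[OF xE] dcJ0 by (simp add: a_def)
    moreover have "Pr I x = greedy_sum e r (bb q)"
    proof -
      have "Pr I x = Pr I (bb q)" unfolding Pr_def using aI by (intro sum.cong) (auto simp: a_def)
      also have "\<dots> = greedy_sum e r (bb q)" using greedy_sum_eq[OF bbE] by (simp add: I_def)
      finally show ?thesis .
    qed
    ultimately have eq: "greedy_sum e r (bb q) = greedy_sum e (card J) x - greedy_sum e (card J0) x"
      by (simp add: algebra_simps)
    have Jsub: "J \<subseteq> {..<LL q}"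
    proof -
      have "LL n \<le> LL q" by (rule LLmono) (simp add: q_def)
      then show ?thesis using Iloc by (auto simp: J_def J0_def)
    qed
    have cJ: "card J \<le> LL q + 1"
      using card_mono[OF _ Jsub] by simp
    have cJ0: "card J0 \<le> LL q + 1"
      using card_mono[OF _ Jsub] card_mono[OF finJ, of J0] by (simp add: J_def)
    have "labs (greedy_sum e r (bb q)) \<le> labs (greedy_sum e (card J) x) + labs (greedy_sum e (card J0) x)"
      unfolding eq by (rule labs_triangle_diff)
    also have "\<dots> \<le> Phi x (LL q + 1) + Phi x (LL q + 1)"
      by (intro add_mono Phi_ge cJ cJ0) simp_all
    finally show ?thesis .
  qed
  have "Phi (bb q) m \<le> Phi x (LL q + 1) + Phi x (LL q + 1)"
    by (rule Phi_le[OF m(1)]) (rule bound)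
  then have "norm (Phi (bb q) m) \<le> norm (Phi x (LL q + 1) + Phi x (LL q + 1))"
    by (rule norm_mono_nonneg[OF Phi_nonneg[OF m(1)]])
  also have "\<dots> \<le> 2 * B"
    using norm_triangle_ineq[of "Phi x (LL q + 1)" "Phi x (LL q + 1)"] B[of "LL q + 1"] by simp
  also have "\<dots> < real q" using n by (simp add: q_def)
  finally show False using m(2) by simp
qed

lemma main:
  shows "((\<forall>x\<in>E. u_conv (\<lambda>m. greedy_sum e m x) x)
            \<longleftrightarrow> (\<forall>x\<in>E. o_conv (\<lambda>m. greedy_sum e m x) x))
       \<and> ((\<forall>x\<in>E. o_conv (\<lambda>m. greedy_sum e m x) x)
            \<longleftrightarrow> (\<forall>x\<in>E. \<exists>u. \<forall>m. labs (greedy_sum e m x) \<le> u))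
       \<and> ((\<forall>x\<in>E. \<exists>u. \<forall>m. labs (greedy_sum e m x) \<le> u)
            \<longleftrightarrow> (\<forall>x\<in>E. \<exists>B. \<forall>m\<ge>1.
                   norm (Sup_fin ((\<lambda>n. labs (greedy_sum e n x)) ` {1..m})) \<le> B))
       \<and> ((\<forall>x\<in>E. \<exists>B. \<forall>m\<ge>1.
                   norm (Sup_fin ((\<lambda>n. labs (greedy_sum e n x)) ` {1..m})) \<le> B)
            \<longleftrightarrow> (\<exists>C\<ge>1. \<forall>x\<in>E. \<forall>m\<ge>1.
                   norm (Sup_fin ((\<lambda>n. labs (greedy_sum e n x)) ` {1..m})) \<le> C * norm x))"
proof -
  let ?A1 = "\<forall>x\<in>E. u_conv (\<lambda>m. greedy_sum e m x) x"
  let ?A2 = "\<forall>x\<in>E. o_conv (\<lambda>m. greedy_sum e m x) x"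
  let ?A3 = "\<forall>x\<in>E. \<exists>u. \<forall>m. labs (greedy_sum e m x) \<le> u"
  let ?A4 = "\<forall>x\<in>E. \<exists>B. \<forall>m\<ge>1. norm (Phi x m) \<le> B"
  let ?A5 = "\<exists>C\<ge>1. \<forall>x\<in>E. \<forall>m\<ge>1. norm (Phi x m) \<le> C * norm x"
  have 12: "?A1 \<Longrightarrow> ?A2" using u_conv_imp_o_conv by blast
  have 23: "?A2 \<Longrightarrow> ?A3" using o_conv_bounded by blast
  have 34: "?A3 \<Longrightarrow> ?A4"
  proof -
    assume A3: ?A3
    show ?A4
    proof
      fix x assume "x \<in> E"
      then obtain u where "\<forall>m. labs (greedy_sum e m x) \<le> u" using A3 by blast
      then have "\<forall>m\<ge>1. norm (Phi x m) \<le> norm u" using iii_iv by blast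
      then show "\<exists>B. \<forall>m\<ge>1. norm (Phi x m) \<le> B" by blast
    qed
  qed
  have 45: "?A4 \<Longrightarrow> ?A5" by (rule iv_imp_v)
  have 51: "?A5 \<Longrightarrow> ?A1"
  proof -
    assume ?A5
    then obtain C where "\<forall>x\<in>E. \<forall>m\<ge>1. norm (Phi x m) \<le> C * norm x" by blast
    then show ?A1 using v_imp_i by blast
  qed
  have "?A1 = ?A2" "?A2 = ?A3" "?A3 = ?A4" "?A4 = ?A5"
    using 12 23 34 45 51 by blast+
  then show ?thesis unfolding Phi_def by blast
qed

end

theorem theorem3p3:
  fixes e :: "nat \<Rightarrow> 'a::banach_lattice"
  assumes "basic_sequence e" and "semi_normalized e"
  defines "E \<equiv> cspan e"
  shows "((\<forall>x\<in>E. u_conv (\<lambda>m. greedy_sum e m x) x)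
            \<longleftrightarrow> (\<forall>x\<in>E. o_conv (\<lambda>m. greedy_sum e m x) x))
       \<and> ((\<forall>x\<in>E. o_conv (\<lambda>m. greedy_sum e m x) x)
            \<longleftrightarrow> (\<forall>x\<in>E. \<exists>u. \<forall>m. labs (greedy_sum e m x) \<le> u))
       \<and> ((\<forall>x\<in>E. \<exists>u. \<forall>m. labs (greedy_sum e m x) \<le> u)
            \<longleftrightarrow> (\<forall>x\<in>E. \<exists>B. \<forall>m\<ge>1.
                   norm (Sup_fin ((\<lambda>n. labs (greedy_sum e n x)) ` {1..m})) \<le> B))
       \<and> ((\<forall>x\<in>E. \<exists>B. \<forall>m\<ge>1.
                   norm (Sup_fin ((\<lambda>n. labs (greedy_sum e n x)) ` {1..m})) \<le> B)
            \<longleftrightarrow> (\<exists>C\<ge>1. \<forall>x\<in>E. \<forall>m\<ge>1.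
                   norm (Sup_fin ((\<lambda>n. labs (greedy_sum e n x)) ` {1..m})) \<le> C * norm x))"
proof -
  interpret bseq e by (rule bseq.intro[OF assms(1,2)])
  show ?thesis unfolding E_def by (rule main)
qed


end
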